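(* Let $N_1$ and $N_2$ be phylogenetic networks on the same set $S$ of taxa. If $m(N_1,N_2)=0$ (equivalently, $\Upsilon(N_1)=\Upsilon(N_2)$), then $N_1$ and $N_2$ are indistinguishable, i.e. their reduced versions satisfy $R(N_1)\cong R(N_2)$.
   Context: A phylogenetic network on a finite set $S$ of taxa is a finite rooted directed acyclic graph (exactly one node without parents) whose leaves (nodes without children) are bijectively labeled by the elements of $S$. A tree node is a node with at most one parent; a hybrid node is a node with more than one parent. The height $h(v)$ of a node is the largest length of a directed path from $v$ to a leaf. The nested label $\ell(v)$ of a node $v$ is defined by induction on height: if $v$ is a leaf labeled $i$, $\ell(v)=\{i\}$; otherwise, if $v_1,\dots,v_k$ are the children of $v$, $\ell(v)$ is the multiset $\{\ell(v_1),\dots,\ell(v_k)\}$. $\Upsilon(N)$ is the multiset of nested labels of all nodes of $N$ (each nested label counted with multiplicity the number of nodes having it), and $m(N_1,N_2)=\frac12|\Upsilon(N_1)\bigtriangleup\Upsilon(N_2)|$, where for multisets $M_1,M_2$ the symmetric difference gives each element multiplicity $|M_1(x)-M_2(x)|$ and $|M|$ is the sum of multiplicities. The cluster of a node $u$ is the set of labels of leaves descending from $u$; two nodes are convergent when they have the same cluster. For a node $u$, $N(u)$ denotes the subgraph induced on the descendants of $u$; a clade of $N$ is a subgraph $N(u)$ all of whose nodes are tree nodes of $N$. The reduced version $R(N)$ is obtained as follows. If $N$ has no pair of distinct convergent nodes, $R(N)=N$. Otherwise: (0) for every maximal clade $T$ of $N$ with root $r_T$, insert a new node $h_T$ between $r_T$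 and its only parent, label $h_T$ by a symbol for $T$, and remove $r_T$ and its descendants, so $h_T$ becomes a "symbolic leaf"; call the result $N^*$ (its leaves are symbolic leaves and hybrid leaves of $N$). (1) Remove from $N^*$ all internal nodes that are convergent in $N$ with some other node, and all internal nodes of $N^*$ that are descendants of some removed node. (2) For every remaining node $x$ that was a parent of a node $v$ removed in (1), add an arc from $x$ to every (hybrid or symbolic) leaf that was a descendant of $v$ in $N^*$, if such an arc does not already exist. (3) For every symbolic leaf $h_T$, remove its label and append the clade $T$ to it via an arc $(h_T,r_T)$. (4) Replace every node with exactly one parent and one child by an arc from its parent to its child. Isomorphism $\cong$ of such leaf-labeled DAGs means a digraph isomorphism mapping each leaf to the leaf with the same label. Two networks are indistinguishable when $R(N_1)\cong R(N_2)$. *)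

theory Defs
  imports Complex_Main "HOL-Library.Multiset"
begin

text \<open>A (candidate) network: a node set, a set of arcs (u,v) meaning u is a parent of v,
  and a labelling of nodes (only relevant on leaves).\<close>

record ('v, 's) net =
  nodes :: "'v set"
  arcs  :: "('v \<times> 'v) set"
  label :: "'v \<Rightarrow> 's"

definition children :: "('v, 's) net \<Rightarrow> 'v \<Rightarrow> 'v set" where
  "children N v = {w. (v, w) \<in> arcs N}"

definition parents :: "('v, 's) net \<Rightarrow> 'v \<Rightarrow> 'v set" where
  "parents N v = {u. (u, v) \<in> arcs N}"

definition leaves :: "('v, 's) net \<Rightarrow> 'v set" where
  "leaves N = {v \<in> nodes N. children N v = {}}"

definition phylo_net :: "'s set \<Rightarrow> ('v, 's) net \<Rightarrow> bool" where
  "phylo_net S N \<longleftrightarrow>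
     finite (nodes N) \<and> arcs N \<subseteq> nodes N \<times> nodes N \<and> acyclic (arcs N) \<and>
     (\<exists>!r. r \<in> nodes N \<and> parents N r = {}) \<and>
     bij_betw (label N) (leaves N) S"

definition tree_node :: "('v, 's) net \<Rightarrow> 'v \<Rightarrow> bool" where
  "tree_node N v \<longleftrightarrow> v \<in> nodes N \<and> card (parents N v) \<le> 1"

definition hybrid_node :: "('v, 's) net \<Rightarrow> 'v \<Rightarrow> bool" where
  "hybrid_node N v \<longleftrightarrow> v \<in> nodes N \<and> card (parents N v) > 1"

definition desc :: "('v, 's) net \<Rightarrow> 'v \<Rightarrow> 'v set" where
  "desc N u = {w. (u, w) \<in> (arcs N)\<^sup>*}"

definition cluster :: "('v, 's) net \<Rightarrow> 'v \<Rightarrow> 's set" where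
  "cluster N u = label N ` (leaves N \<inter> desc N u)"

definition convergent :: "('v, 's) net \<Rightarrow> 'v \<Rightarrow> 'v \<Rightarrow> bool" where
  "convergent N u v \<longleftrightarrow> cluster N u = cluster N v"

datatype 's nlabel = NLeaf 's | NNode "'s nlabel multiset"

inductive has_nl :: "('v, 's) net \<Rightarrow> 'v \<Rightarrow> 's nlabel \<Rightarrow> bool" for N where
  leaf: "v \<in> leaves N \<Longrightarrow> has_nl N v (NLeaf (label N v))"
| node: "v \<in> nodes N \<Longrightarrow> children N v \<noteq> {} \<Longrightarrow>
         (\<And>c. c \<in> children N v \<Longrightarrow> has_nl N c (f c)) \<Longrightarrow>
         has_nl N v (NNode (image_mset f (mset_set (children N v))))"

definition nested_label :: "('v, 's) net \<Rightarrow> 'v \<Rightarrow> 's nlabel" where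
  "nested_label N v = (THE l. has_nl N v l)"

definition Upsilon :: "('v, 's) net \<Rightarrow> 's nlabel multiset" where
  "Upsilon N = image_mset (nested_label N) (mset_set (nodes N))"

text \<open>m(N1,N2) = |Upsilon N1 symmetric-difference Upsilon N2| / 2 (multiset symmetric
  difference: multiplicity |M1(x) - M2(x)|).\<close>
definition mdist :: "('v, 's) net \<Rightarrow> ('w, 's) net \<Rightarrow> real" where
  "mdist N1 N2 = real (size ((Upsilon N1 - Upsilon N2) + (Upsilon N2 - Upsilon N1))) / 2"

definition clade_root :: "('v, 's) net \<Rightarrow> 'v \<Rightarrow> bool" where
  "clade_root N u \<longleftrightarrow> u \<in> nodes N \<and> (\<forall>w \<in> desc N u. tree_node N w)"

definition max_clade_root :: "('v, 's) net \<Rightarrow> 'v \<Rightarrow> bool" where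
  "max_clade_root N r \<longleftrightarrow> clade_root N r \<and>
     \<not> (\<exists>r'. clade_root N r' \<and> r' \<noteq> r \<and> r \<in> desc N r')"

definition in_clade :: "('v, 's) net \<Rightarrow> 'v \<Rightarrow> bool" where
  "in_clade N v \<longleftrightarrow> (\<exists>r. clade_root N r \<and> v \<in> desc N r)"

text \<open>Step (0): the graph N*. Node Inl v is the original node v (not in any clade),
  node Inr r is the symbolic leaf h_T of the maximal clade T rooted at r.\<close>
definition star_nodes :: "('v, 's) net \<Rightarrow> ('v + 'v) set" where
  "star_nodes N = Inl ` {v \<in> nodes N. \<not> in_clade N v} \<union> Inr ` {r. max_clade_root N r}"

definition star_arcs :: "('v, 's) net \<Rightarrow> (('v + 'v) \<times> ('v + 'v)) set" where
  "star_arcs N =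
     {(Inl u, Inl v) | u v. (u, v) \<in> arcs N \<and> \<not> in_clade N u \<and> \<not> in_clade N v} \<union>
     {(Inl p, Inr r) | p r. (p, r) \<in> arcs N \<and> max_clade_root N r}"

definition star_internal :: "('v, 's) net \<Rightarrow> ('v + 'v) set" where
  "star_internal N = {x \<in> star_nodes N. \<exists>y. (x, y) \<in> star_arcs N}"

definition star_leaves :: "('v, 's) net \<Rightarrow> ('v + 'v) set" where
  "star_leaves N = {x \<in> star_nodes N. \<forall>y. (x, y) \<notin> star_arcs N}"

definition removed0 :: "('v, 's) net \<Rightarrow> ('v + 'v) set" where
  "removed0 N = {x \<in> star_internal N. \<exists>v w. x = Inl v \<and> w \<in> nodes N \<and> w \<noteq> v \<and> convergent N v w}"

definition removed :: "('v, 's) net \<Rightarrow> ('v + 'v) set" where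
  "removed N = removed0 N \<union>
     {x \<in> star_internal N. \<exists>d \<in> removed0 N. (d, x) \<in> (star_arcs N)\<^sup>+}"

definition step3_nodes :: "('v, 's) net \<Rightarrow> ('v + 'v) set" where
  "step3_nodes N = (star_nodes N - removed N) \<union> Inl ` {v \<in> nodes N. in_clade N v}"

definition step3_arcs :: "('v, 's) net \<Rightarrow> (('v + 'v) \<times> ('v + 'v)) set" where
  "step3_arcs N =
     {(x, y) \<in> star_arcs N. x \<notin> removed N \<and> y \<notin> removed N} \<union>
     {(x, l) | x v l. x \<in> star_nodes N - removed N \<and> v \<in> removed N \<and>
                      (x, v) \<in> star_arcs N \<and> l \<in> star_leaves N \<and> (v, l) \<in> (star_arcs N)\<^sup>*} \<union>
     {(Inr r, Inl r) | r. max_clade_root N r} \<union>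
     {(Inl u, Inl v) | u v. (u, v) \<in> arcs N \<and> in_clade N u \<and> in_clade N v}"

definition elementary3 :: "('v, 's) net \<Rightarrow> ('v + 'v) set" where
  "elementary3 N = {x \<in> step3_nodes N. card {y. (y, x) \<in> step3_arcs N} = 1 \<and>
                                      card {y. (x, y) \<in> step3_arcs N} = 1}"

definition sum_label :: "('v, 's) net \<Rightarrow> ('v + 'v) \<Rightarrow> 's" where
  "sum_label N x = (case x of Inl v \<Rightarrow> label N v | Inr _ \<Rightarrow> undefined)"

definition reduced :: "('v, 's) net \<Rightarrow> ('v + 'v, 's) net" where
  "reduced N =
    (if \<not> (\<exists>u \<in> nodes N. \<exists>v \<in> nodes N. u \<noteq> v \<and> convergent N u v)
     then \<lparr>nodes = Inl ` nodes N, arcs = map_prod Inl Inl ` arcs N, label = sum_label N\<rparr>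
     else
       \<lparr>nodes = step3_nodes N - elementary3 N,
        arcs = {(a, b). a \<in> step3_nodes N - elementary3 N \<and> b \<in> step3_nodes N - elementary3 N \<and>
                        (\<exists>c. (a, c) \<in> step3_arcs N \<and>
                             (c, b) \<in> {(x, y) \<in> step3_arcs N. x \<in> elementary3 N}\<^sup>*)},
        label = sum_label N\<rparr>)"

definition net_iso :: "('a, 's) net \<Rightarrow> ('b, 's) net \<Rightarrow> bool" where
  "net_iso A B \<longleftrightarrow> (\<exists>f. bij_betw f (nodes A) (nodes B) \<and>
     (\<forall>u \<in> nodes A. \<forall>v \<in> nodes A. (u, v) \<in> arcs A \<longleftrightarrow> (f u, f v) \<in> arcs B) \<and>
     (\<forall>v \<in> leaves A. label B (f v) = label A v))"

end

theory Submission
  imports Defs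
begin


primrec sub :: "'s nlabel \<Rightarrow> 's nlabel set" where
  "sub (NLeaf s) = {NLeaf s}"
| "sub (NNode M) = insert (NNode M) (\<Union> (set_mset (image_mset sub M)))"
primrec lcl :: "'s nlabel \<Rightarrow> 's set" where
  "lcl (NLeaf s) = {s}"
| "lcl (NNode M) = \<Union> (set_mset (image_mset lcl M))"
primrec dep :: "'s nlabel \<Rightarrow> nat" where
  "dep (NLeaf s) = 0"
| "dep (NNode M) = Suc (sum_mset (image_mset dep M))"
fun chm :: "'s nlabel \<Rightarrow> 's nlabel multiset" where
  "chm (NLeaf s) = {#}"
| "chm (NNode M) = M"

lemma sub_self: "x \<in> sub x"
  by (cases x) auto

lemma sub_trans: "y \<in> sub z \<Longrightarrow> x \<in> sub y \<Longrightarrow> x \<in> sub z"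
  by (induction z arbitrary: y) auto

lemma chm_sub: "K \<in># chm L \<Longrightarrow> K \<in> sub L"
  by (cases L) (auto intro: sub_self)

lemma dep_chm: "K \<in># chm L \<Longrightarrow> dep K < dep L"
proof (cases L)
  case (NNode M)
  assume "K \<in># chm L"
  then have "K \<in># M" using NNode by simp
  then have "dep K \<le> sum_mset (image_mset dep M)"
    by (metis mset_subset_eq_single image_mset_subseteq_mono sum_mset.insert image_mset_single
        le_add1 sum_mset_mono mset_subset_eq_exists_conv add_mset_add_single sum_mset.singleton
        sum_mset.union)
  then show ?thesis using NNode by simp
qed simp

lemma count_img: "finite A \<Longrightarrow> count (image_mset f (mset_set A)) y = card {x\<in>A. f x = y}"
proof -
  assume "finite A"
  have "count (image_mset f (mset_set A)) y = size (filter_mset (\<lambda>z. z = y) (image_mset f (mset_set A)))"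
    by (simp add: filter_eq_replicate_mset)
  also have "\<dots> = size (filter_mset (\<lambda>x. f x = y) (mset_set A))"
    by (simp add: filter_mset_image_mset)
  also have "\<dots> = card {x\<in>A. f x = y}"
    using \<open>finite A\<close> by (simp add: filter_mset_mset_set)
  finally show ?thesis .
qed



locale pn =
  fixes S :: "'s set" and N :: "('v, 's) net"
  assumes pn: "phylo_net S N"
begin

abbreviation "V \<equiv> nodes N"
abbreviation "E \<equiv> arcs N"
abbreviation "\<ll> \<equiv> nested_label N"
abbreviation "U \<equiv> Upsilon N"

lemma finV: "finite V" using pn unfolding phylo_net_def by auto
lemma Esub: "E \<subseteq> V \<times> V" using pn unfolding phylo_net_def by auto
lemma acyc: "acyclic E" using pn unfolding phylo_net_def by auto
lemma bij: "bij_betw (label N) (leaves N) S" using pn unfolding phylo_net_def by auto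
lemma finE: "finite E" using finV Esub finite_subset by blast
lemma wfE: "wf (E\<inverse>)" using finE acyc finite_acyclic_wf_converse by blast

lemma arcV1: "(u,v) \<in> E \<Longrightarrow> u \<in> V" using Esub by auto
lemma arcV2: "(u,v) \<in> E \<Longrightarrow> v \<in> V" using Esub by auto
lemma ch_sub: "children N v \<subseteq> V" using Esub unfolding children_def by auto
lemma fin_ch: "finite (children N v)" using ch_sub finV finite_subset by blast

lemma leaf_iff: "v \<in> leaves N \<longleftrightarrow> v \<in> V \<and> (\<forall>w. (v,w) \<notin> E)"
  unfolding leaves_def children_def by auto

lemma ex_nl: "v \<in> V \<Longrightarrow> \<exists>l. has_nl N v l"
proof (induction v rule: wf_induct_rule[OF wfE])
  case (1 v)
  show ?case
  proof (cases "children N v = {}")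
    case True
    then have "v \<in> leaves N" using 1 unfolding leaves_def by auto
    then show ?thesis by (blast intro: has_nl.leaf)
  next
    case False
    have "\<And>c. c \<in> children N v \<Longrightarrow> has_nl N c (SOME l. has_nl N c l)"
    proof -
      fix c assume "c \<in> children N v"
      then have "(c, v) \<in> E\<inverse>" "c \<in> V" using ch_sub unfolding children_def by auto
      then show "has_nl N c (SOME l. has_nl N c l)" using 1 by (meson someI_ex)
    qed
    then show ?thesis using has_nl.node[OF 1(2) False, of "\<lambda>c. SOME l. has_nl N c l"] by blast
  qed
qed

lemma nl_lc: "has_nl N v l \<Longrightarrow> v \<in> leaves N \<Longrightarrow> l = NLeaf (label N v)"
  by (erule has_nl.cases) (auto simp: leaves_def)

lemma nl_nc: "has_nl N v l \<Longrightarrow> v \<notin> leaves N \<Longrightarrow>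
  \<exists>g. l = NNode (image_mset g (mset_set (children N v))) \<and> (\<forall>c\<in>children N v. has_nl N c (g c))"
  by (erule has_nl.cases) (auto simp: leaves_def)

lemma nl_uniq: "has_nl N v l1 \<Longrightarrow> has_nl N v l2 \<Longrightarrow> l1 = l2"
proof (induction arbitrary: l2 rule: has_nl.induct)
  case (leaf v)
  then show ?case using nl_lc by blast
next
  case (node v f)
  then have nl: "v \<notin> leaves N" unfolding leaves_def by auto
  then obtain g where g: "l2 = NNode (image_mset g (mset_set (children N v)))"
     "\<forall>c\<in>children N v. has_nl N c (g c)" using nl_nc node.prems by blast
  have "image_mset f (mset_set (children N v)) = image_mset g (mset_set (children N v))"
    apply (rule image_mset_cong)
    using node.IH g(2) fin_ch by (simp add: finite_set_mset_mset_set[OF fin_ch])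
  then show ?case using g by simp
qed

lemma has_nl_l: "v \<in> V \<Longrightarrow> has_nl N v (\<ll> v)"
  unfolding nested_label_def using ex_nl nl_uniq by (metis theI)

lemma nl_leaf: "v \<in> leaves N \<Longrightarrow> \<ll> v = NLeaf (label N v)"
proof -
  assume v: "v \<in> leaves N"
  have "v \<in> V" using v unfolding leaves_def by simp
  then have "has_nl N v (\<ll> v)" by (rule has_nl_l)
  then show ?thesis using nl_lc v by blast
qed

lemma nl_node: "v \<in> V \<Longrightarrow> children N v \<noteq> {} \<Longrightarrow>
   \<ll> v = NNode (image_mset \<ll> (mset_set (children N v)))"
proof -
  assume v: "v \<in> V" "children N v \<noteq> {}"
  have "has_nl N v (NNode (image_mset \<ll> (mset_set (children N v))))"
    by (rule has_nl.node[OF v]) (use ch_sub has_nl_l in blast)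
  then show ?thesis using has_nl_l[OF v(1)] nl_uniq by blast
qed

lemma nl_node': "v \<in> V \<Longrightarrow> v \<notin> leaves N \<Longrightarrow>
   \<ll> v = NNode (image_mset \<ll> (mset_set (children N v)))"
proof -
  assume a: "v \<in> V" "v \<notin> leaves N"
  then have "children N v \<noteq> {}" unfolding leaves_def by blast
  then show ?thesis using nl_node a by blast
qed

lemma chm_l: "v \<in> V \<Longrightarrow> chm (\<ll> v) = image_mset \<ll> (mset_set (children N v))"
  by (cases "v \<in> leaves N") (auto simp: nl_leaf nl_node' leaves_def)

lemma set_chm_l: "v \<in> V \<Longrightarrow> set_mset (chm (\<ll> v)) = \<ll> ` children N v"
  using chm_l fin_ch by simp

lemma arc_chm: "(v,c) \<in> E \<Longrightarrow> \<ll> c \<in># chm (\<ll> v)"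
  using set_chm_l arcV1 unfolding children_def by auto

lemma chm_arc: "v \<in> V \<Longrightarrow> K \<in># chm (\<ll> v) \<Longrightarrow> \<exists>c. (v,c) \<in> E \<and> \<ll> c = K"
  using set_chm_l unfolding children_def by auto

lemma dep_arc: "(v,c) \<in> E \<Longrightarrow> dep (\<ll> c) < dep (\<ll> v)"
  using arc_chm dep_chm by blast

lemma dep_trancl: "(v,w) \<in> E\<^sup>+ \<Longrightarrow> dep (\<ll> w) < dep (\<ll> v)"
  by (induction rule: trancl_induct) (use dep_arc less_trans in blast)+

lemma desc_sub: "(v,w) \<in> E\<^sup>* \<Longrightarrow> \<ll> w \<in> sub (\<ll> v)"
proof (induction rule: rtrancl_induct)
  case base then show ?case by (rule sub_self)
next
  case (step y z) then show ?case using arc_chm chm_sub sub_trans by blast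
qed

lemma sub_desc: "v \<in> V \<Longrightarrow> M \<in> sub (\<ll> v) \<Longrightarrow> \<exists>w. (v,w) \<in> E\<^sup>* \<and> \<ll> w = M"
proof (induction v arbitrary: M rule: wf_induct_rule[OF wfE])
  case (1 v)
  show ?case
  proof (cases "v \<in> leaves N")
    case True then show ?thesis using 1 nl_leaf by auto
  next
    case False
    have "M = \<ll> v \<or> (\<exists>c \<in> children N v. M \<in> sub (\<ll> c))"
      using 1(3) nl_node'[OF 1(2) False] fin_ch by auto
    then show ?thesis
    proof
      assume "\<exists>c \<in> children N v. M \<in> sub (\<ll> c)"
      then obtain c where c: "(v,c) \<in> E" "M \<in> sub (\<ll> c)" unfolding children_def by auto
      then obtain w where "(c,w) \<in> E\<^sup>*" "\<ll> w = M" using 1(1)[of c] arcV2 by blast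
      then show ?thesis using c by (blast intro: converse_rtrancl_into_rtrancl)
    qed auto
  qed
qed

lemma desc_eq: "(v,w) \<in> E\<^sup>* \<Longrightarrow> \<ll> w = \<ll> v \<Longrightarrow> w = v"
proof (rule ccontr)
  assume a: "(v,w) \<in> E\<^sup>*" "\<ll> w = \<ll> v" "w \<noteq> v"
  then have "(v,w) \<in> E\<^sup>+" by (simp add: rtrancl_eq_or_trancl)
  then show False using dep_trancl a(2) by fastforce
qed

lemma cnt: "count U K = card {v \<in> V. \<ll> v = K}"
  unfolding Upsilon_def by (rule count_img[OF finV])

definition uq :: "'v \<Rightarrow> bool" where
  "uq v \<longleftrightarrow> v \<in> V \<and> (\<forall>w\<in>V. \<ll> w = \<ll> v \<longrightarrow> w = v)"

lemma uq_cnt: "v \<in> V \<Longrightarrow> uq v \<longleftrightarrow> count U (\<ll> v) = 1"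
proof -
  assume v: "v \<in> V"
  let ?A = "{w \<in> V. \<ll> w = \<ll> v}"
  have vin: "v \<in> ?A" using v by simp
  have "uq v \<longleftrightarrow> ?A = {v}" unfolding uq_def using v by auto
  also have "\<dots> \<longleftrightarrow> card ?A = 1"
  proof
    assume "?A = {v}" then show "card ?A = 1" by simp
  next
    assume "card ?A = 1"
    then obtain x where "?A = {x}" by (auto simp: card_1_singleton_iff)
    then show "?A = {v}" using vin by simp
  qed
  finally show ?thesis using cnt by simp
qed

lemma inU: "K \<in># U \<longleftrightarrow> (\<exists>v\<in>V. \<ll> v = K)"
  unfolding Upsilon_def using finV by auto

lemma desc_iff: "(v,w) \<in> E\<^sup>* \<longleftrightarrow> w = v \<or> (\<exists>c. (v,c) \<in> E \<and> (c,w) \<in> E\<^sup>*)"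
  apply (rule iffI)
   apply (erule converse_rtranclE; blast)
  apply (blast intro: converse_rtrancl_into_rtrancl)
  done

lemma leaf_nl: "v \<in> V \<Longrightarrow> \<ll> v = NLeaf s \<longleftrightarrow> v \<in> leaves N \<and> label N v = s"
  by (cases "v \<in> leaves N") (simp_all add: nl_leaf nl_node')

lemma leaf_uq: "v \<in> leaves N \<Longrightarrow> uq v"
proof -
  assume v: "v \<in> leaves N"
  have vV: "v \<in> V" using v unfolding leaves_def by simp
  have "\<And>w. w \<in> V \<Longrightarrow> \<ll> w = \<ll> v \<Longrightarrow> w = v"
  proof -
    fix w assume w: "w \<in> V" "\<ll> w = \<ll> v"
    then have "\<ll> w = NLeaf (label N v)" using nl_leaf[OF v] by simp
    then have "w \<in> leaves N" "label N w = label N v" using leaf_nl[OF w(1)] by auto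
    then show "w = v" using bij v unfolding bij_betw_def inj_on_def by blast
  qed
  then show ?thesis unfolding uq_def using vV by blast
qed

lemma desc_ch: "w \<in> desc N v \<longleftrightarrow> w = v \<or> (\<exists>c\<in>children N v. w \<in> desc N c)"
proof -
  have "(v,w) \<in> E\<^sup>* \<longleftrightarrow> w = v \<or> (\<exists>c. (v,c) \<in> E \<and> (c,w) \<in> E\<^sup>*)" by (rule desc_iff)
  then show ?thesis unfolding desc_def children_def by blast
qed

lemma cluster_lcl: "v \<in> V \<Longrightarrow> cluster N v = lcl (\<ll> v)"
proof (induction v rule: wf_induct_rule[OF wfE])
  case (1 v)
  show ?case
  proof (cases "v \<in> leaves N")
    case True
    have ch: "children N v = {}" using True unfolding leaves_def by simp
    have "desc N v = {v}" by (auto simp: desc_ch[of _ v] ch)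
    then show ?thesis using True by (simp add: cluster_def nl_leaf)
  next
    case False
    have e: "leaves N \<inter> desc N v = (\<Union>c\<in>children N v. leaves N \<inter> desc N c)"
      using False by (auto simp: desc_ch[of _ v])
    have "cluster N v = (\<Union>c\<in>children N v. cluster N c)"
      unfolding cluster_def e by (rule image_UN)
    also have "\<dots> = (\<Union>c\<in>children N v. lcl (\<ll> c))"
    proof (rule SUP_cong)
      fix c assume "c \<in> children N v"
      then have "(c,v) \<in> E\<inverse>" "c \<in> V" using ch_sub unfolding children_def by auto
      then show "cluster N c = lcl (\<ll> c)" using 1(1) by blast
    qed simp
    finally show ?thesis using nl_node'[OF 1(2) False] fin_ch by simp
  qed
qed

end


definition pc :: "'s nlabel multiset \<Rightarrow> 's nlabel \<Rightarrow> nat" where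
  "pc UU M = sum_mset (image_mset (\<lambda>K. count (chm K) M) UU)"

definition CRl :: "'s nlabel multiset \<Rightarrow> 's nlabel \<Rightarrow> bool" where
  "CRl UU L \<longleftrightarrow> L \<in># UU \<and> (\<forall>M \<in> sub L. count UU M = 1 \<and> pc UU M \<le> 1)"

definition inCl :: "'s nlabel multiset \<Rightarrow> 's nlabel \<Rightarrow> bool" where
  "inCl UU K \<longleftrightarrow> (\<exists>L. CRl UU L \<and> K \<in> sub L)"

definition MRl :: "'s nlabel multiset \<Rightarrow> 's nlabel \<Rightarrow> bool" where
  "MRl UU L \<longleftrightarrow> CRl UU L \<and> \<not> (\<exists>L'. CRl UU L' \<and> L' \<noteq> L \<and> L \<in> sub L')"

context pn begin

lemma reach_leaf: "v \<in> V \<Longrightarrow> \<exists>x \<in> leaves N. (v,x) \<in> E\<^sup>*"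
proof (induction v rule: wf_induct_rule[OF wfE])
  case (1 v)
  show ?case
  proof (cases "v \<in> leaves N")
    case False
    then obtain c where c: "(v,c) \<in> E" using 1(2) unfolding leaves_def children_def by auto
    then have "(c,v) \<in> E\<inverse>" "c \<in> V" using arcV2 by auto
    then obtain x where "x \<in> leaves N" "(c,x) \<in> E\<^sup>*" using 1(1) by blast
    then show ?thesis using c by (blast intro: converse_rtrancl_into_rtrancl)
  qed auto
qed

lemma rtr_V: "(v,w) \<in> E\<^sup>* \<Longrightarrow> v \<in> V \<Longrightarrow> w \<in> V"
  by (induction rule: rtrancl_induct) (auto dest: arcV2)

lemma clade_root_V: "clade_root N r \<Longrightarrow> r \<in> V" unfolding clade_root_def by simp

lemma in_clade_V: "in_clade N v \<Longrightarrow> v \<in> V"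
  unfolding in_clade_def clade_root_def desc_def using rtr_V by blast

lemma in_clade_desc: "in_clade N v \<Longrightarrow> (v,w) \<in> E\<^sup>* \<Longrightarrow> in_clade N w"
  unfolding in_clade_def desc_def by (meson mem_Collect_eq rtrancl_trans)

lemma in_clade_arc: "in_clade N v \<Longrightarrow> (v,w) \<in> E \<Longrightarrow> in_clade N w"
  using in_clade_desc by blast

lemma in_clade_tree: "in_clade N v \<Longrightarrow> tree_node N v"
  unfolding in_clade_def clade_root_def by blast

lemma fin_par: "finite (parents N v)"
proof -
  have "parents N v \<subseteq> V" using Esub unfolding parents_def by auto
  then show ?thesis using finV finite_subset by blast
qed

lemma tree_par: "tree_node N y \<Longrightarrow> (z,y) \<in> E \<Longrightarrow> (p,y) \<in> E \<Longrightarrow> z = p"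
proof -
  assume a: "tree_node N y" "(z,y) \<in> E" "(p,y) \<in> E"
  have "card (parents N y) \<le> 1" using a(1) unfolding tree_node_def by simp
  moreover have "z \<in> parents N y" "p \<in> parents N y" using a unfolding parents_def by auto
  ultimately show ?thesis using card_le_Suc0_iff_eq[OF fin_par[of y]] by auto
qed

lemma clade_comparable:
  assumes w: "in_clade N w" and y: "(w2,y) \<in> E\<^sup>*" "(w,y) \<in> E\<^sup>*"
  shows "(w2,w) \<in> E\<^sup>* \<or> (w,w2) \<in> E\<^sup>*"
  using y(1) y(2)
proof (induction rule: rtrancl_induct)
  case base then show ?case by simp
next
  case (step z y)
  show ?case
  proof (cases "y = w")
    case True then show ?thesis using step(1,2) by auto
  next
    case False
    then have "(w,y) \<in> E\<^sup>+" using step(4) by (simp add: rtrancl_eq_or_trancl)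
    then obtain p where p: "(w,p) \<in> E\<^sup>*" "(p,y) \<in> E" by (meson tranclD2)
    have "tree_node N y" using in_clade_desc[OF w step(4)] in_clade_tree by blast
    then have "z = p" using tree_par step(2) p(2) by blast
    then show ?thesis using step(3) p(1) by blast
  qed
qed

lemma clade_uq: assumes w: "in_clade N w" shows "uq w"
proof -
  have wV: "w \<in> V" using in_clade_V w by blast
  have "\<And>w2. w2 \<in> V \<Longrightarrow> \<ll> w2 = \<ll> w \<Longrightarrow> w2 = w"
  proof -
    fix w2 assume w2: "w2 \<in> V" "\<ll> w2 = \<ll> w"
    obtain x where x: "x \<in> leaves N" "(w,x) \<in> E\<^sup>*" using reach_leaf wV by blast
    have "cluster N w2 = cluster N w" using cluster_lcl w2 wV by simp
    moreover have "label N x \<in> cluster N w" using x unfolding cluster_def desc_def by auto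
    ultimately have "label N x \<in> label N ` (leaves N \<inter> desc N w2)" unfolding cluster_def by simp
    then obtain x' where x': "x' \<in> leaves N" "(w2,x') \<in> E\<^sup>*" "label N x' = label N x"
      unfolding desc_def by (auto simp del: Int_iff)
    have "x' = x" using x' x bij unfolding bij_betw_def inj_on_def by blast
    then have "(w2,w) \<in> E\<^sup>* \<or> (w,w2) \<in> E\<^sup>*" using clade_comparable[OF w] x' x by blast
    then show "w2 = w" using desc_eq w2(2) by metis
  qed
  then show ?thesis unfolding uq_def using wV by blast
qed

lemma pc_uq: assumes v: "uq v" shows "card (parents N v) = pc U (\<ll> v)"
proof -
  have vV: "v \<in> V" using v unfolding uq_def by simp
  have "pc U (\<ll> v) = (\<Sum>p\<in>V. count (chm (\<ll> p)) (\<ll> v))"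
    unfolding pc_def Upsilon_def by (simp add: sum_unfold_sum_mset image_mset.compositionality comp_def)
  also have "\<dots> = (\<Sum>p\<in>V. if (p,v) \<in> E then 1 else 0)"
  proof (rule sum.cong)
    fix p assume p: "p \<in> V"
    have "count (chm (\<ll> p)) (\<ll> v) = card {c \<in> children N p. \<ll> c = \<ll> v}"
      using chm_l[OF p] count_img[OF fin_ch] by simp
    also have "{c \<in> children N p. \<ll> c = \<ll> v} = (if (p,v) \<in> E then {v} else {})"
      using v ch_sub unfolding uq_def children_def by auto
    finally show "count (chm (\<ll> p)) (\<ll> v) = (if (p,v) \<in> E then 1 else 0)" by simp
  qed simp
  also have "\<dots> = card {p \<in> V. (p,v) \<in> E}"
    using finV by (simp add: sum.If_cases Int_def)
  also have "{p \<in> V. (p,v) \<in> E} = parents N v"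
    unfolding parents_def using arcV1 by auto
  finally show ?thesis by simp
qed

lemma tree_uq: "uq v \<Longrightarrow> tree_node N v \<longleftrightarrow> pc U (\<ll> v) \<le> 1"
  using pc_uq unfolding tree_node_def uq_def by simp

lemma clade_root_iff: "clade_root N v \<longleftrightarrow> v \<in> V \<and> CRl U (\<ll> v)"
proof
  assume cr: "clade_root N v"
  then have vV: "v \<in> V" by (rule clade_root_V)
  have "\<forall>M \<in> sub (\<ll> v). count U M = 1 \<and> pc U M \<le> 1"
  proof
    fix M assume "M \<in> sub (\<ll> v)"
    then obtain w where w: "(v,w) \<in> E\<^sup>*" "\<ll> w = M" using sub_desc vV by blast
    have "in_clade N w" using cr w(1) unfolding in_clade_def desc_def by blast
    then have "uq w" "tree_node N w" using clade_uq in_clade_tree by auto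
    then show "count U M = 1 \<and> pc U M \<le> 1"
      using w(2) uq_cnt tree_uq unfolding uq_def by auto
  qed
  then show "v \<in> V \<and> CRl U (\<ll> v)" unfolding CRl_def using vV inU by blast
next
  assume a: "v \<in> V \<and> CRl U (\<ll> v)"
  have "\<forall>w \<in> desc N v. tree_node N w"
  proof
    fix w assume "w \<in> desc N v"
    then have w: "(v,w) \<in> E\<^sup>*" "w \<in> V" using rtr_V a unfolding desc_def by auto
    then have "\<ll> w \<in> sub (\<ll> v)" using desc_sub by blast
    then have "count U (\<ll> w) = 1" "pc U (\<ll> w) \<le> 1" using a unfolding CRl_def by auto
    then show "tree_node N w" using uq_cnt tree_uq w(2) by auto
  qed
  then show "clade_root N v" unfolding clade_root_def using a by blast
qed

lemma CRl_node: "CRl U L \<Longrightarrow> \<exists>r. clade_root N r \<and> \<ll> r = L"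
proof -
  assume a: "CRl U L"
  then have "L \<in># U" unfolding CRl_def by simp
  then obtain r where r: "r \<in> V" "\<ll> r = L" using inU by blast
  then have "clade_root N r" using clade_root_iff a by simp
  then show ?thesis using r by blast
qed

lemma in_clade_iff: "in_clade N v \<longleftrightarrow> v \<in> V \<and> inCl U (\<ll> v)"
proof
  assume a: "in_clade N v"
  then obtain r where r: "clade_root N r" "(r,v) \<in> E\<^sup>*" unfolding in_clade_def desc_def by auto
  have "CRl U (\<ll> r)" using r(1) clade_root_iff by simp
  moreover have "\<ll> v \<in> sub (\<ll> r)" using desc_sub r(2) by simp
  ultimately have "inCl U (\<ll> v)" unfolding inCl_def by blast
  then show "v \<in> V \<and> inCl U (\<ll> v)" using in_clade_V a by simp
next
  assume a: "v \<in> V \<and> inCl U (\<ll> v)"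
  then obtain L where L: "CRl U L" "\<ll> v \<in> sub L" unfolding inCl_def by blast
  then obtain r where r: "clade_root N r" "\<ll> r = L" using CRl_node by blast
  then obtain w where w: "(r,w) \<in> E\<^sup>*" "\<ll> w = \<ll> v" using sub_desc clade_root_V L(2) by blast
  then have "in_clade N w" using r unfolding in_clade_def desc_def by blast
  then have "uq w" by (rule clade_uq)
  then have "w = v" using a w(2) unfolding uq_def by metis
  then show "in_clade N v" using \<open>in_clade N w\<close> by simp
qed

lemma mcr_iff: "max_clade_root N r \<longleftrightarrow> r \<in> V \<and> MRl U (\<ll> r)"
proof -
  have "(\<exists>r'. clade_root N r' \<and> r' \<noteq> r \<and> r \<in> desc N r') \<longleftrightarrow>
        (\<exists>L'. CRl U L' \<and> L' \<noteq> \<ll> r \<and> \<ll> r \<in> sub L')" if cr: "clade_root N r"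
  proof
    assume "\<exists>r'. clade_root N r' \<and> r' \<noteq> r \<and> r \<in> desc N r'"
    then obtain r' where r': "clade_root N r'" "r' \<noteq> r" "(r',r) \<in> E\<^sup>*" unfolding desc_def by auto
    have "uq r'" using clade_uq r'(1) unfolding in_clade_def desc_def by blast
    then have "\<ll> r' \<noteq> \<ll> r" using r'(2) clade_root_V[OF cr] unfolding uq_def by metis
    moreover have "CRl U (\<ll> r')" using r'(1) clade_root_iff by simp
    moreover have "\<ll> r \<in> sub (\<ll> r')" using desc_sub r'(3) by simp
    ultimately show "\<exists>L'. CRl U L' \<and> L' \<noteq> \<ll> r \<and> \<ll> r \<in> sub L'" by blast
  next
    assume "\<exists>L'. CRl U L' \<and> L' \<noteq> \<ll> r \<and> \<ll> r \<in> sub L'"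
    then obtain L' where L: "CRl U L'" "L' \<noteq> \<ll> r" "\<ll> r \<in> sub L'" by blast
    then obtain r' where r': "clade_root N r'" "\<ll> r' = L'" using CRl_node by blast
    then obtain w where w: "(r',w) \<in> E\<^sup>*" "\<ll> w = \<ll> r" using sub_desc clade_root_V L(3) by blast
    then have "in_clade N w" using r' unfolding in_clade_def desc_def by blast
    then have "uq w" by (rule clade_uq)
    then have "w = r" using clade_root_V[OF cr] w(2) unfolding uq_def by metis
    then show "\<exists>r'. clade_root N r' \<and> r' \<noteq> r \<and> r \<in> desc N r'"
      using r' w L(2) unfolding desc_def by blast
  qed
  then show ?thesis unfolding max_clade_root_def MRl_def using clade_root_iff[of r] by metis
qed

end


context pn begin

abbreviation "Cl v \<equiv> in_clade N v"
abbreviation "MR r \<equiv> max_clade_root N r"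
abbreviation "SA \<equiv> star_arcs N"

definition Dn :: "'v \<Rightarrow> bool" where
  "Dn d \<longleftrightarrow> d \<in> V \<and> \<not> Cl d \<and> d \<notin> leaves N \<and> (\<exists>w\<in>V. w \<noteq> d \<and> convergent N d w)"

definition Rm :: "'v \<Rightarrow> bool" where
  "Rm v \<longleftrightarrow> v \<in> V \<and> \<not> Cl v \<and> v \<notin> leaves N \<and> (\<exists>d. Dn d \<and> (d,v) \<in> E\<^sup>*)"

lemma mcr_V: "MR r \<Longrightarrow> r \<in> V"
  unfolding max_clade_root_def clade_root_def by simp

lemma mcr_Cl: "MR r \<Longrightarrow> Cl r"
  unfolding max_clade_root_def in_clade_def desc_def by blast

lemma clade_child_mcr:
  assumes pc: "(p,c) \<in> E" and np: "\<not> Cl p" and cc: "Cl c"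
  shows "MR c"
proof -
  obtain r where r: "clade_root N r" "(r,c) \<in> E\<^sup>*" using cc unfolding in_clade_def desc_def by auto
  have cV: "c \<in> V" using arcV2 pc by blast
  have crc: "clade_root N c" unfolding clade_root_def
  proof (intro conjI ballI)
    show "c \<in> V" by (rule cV)
  next
    fix w assume "w \<in> desc N c"
    then have "w \<in> desc N r" using r(2) unfolding desc_def by auto
    then show "tree_node N w" using r(1) unfolding clade_root_def by blast
  qed
  have "\<not> (\<exists>r'. clade_root N r' \<and> r' \<noteq> c \<and> c \<in> desc N r')"
  proof
    assume "\<exists>r'. clade_root N r' \<and> r' \<noteq> c \<and> c \<in> desc N r'"
    then obtain r' where r': "clade_root N r'" "r' \<noteq> c" "(r',c) \<in> E\<^sup>*" unfolding desc_def by auto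
    then have "(r',c) \<in> E\<^sup>+" by (simp add: rtrancl_eq_or_trancl)
    then obtain q where q: "(r',q) \<in> E\<^sup>*" "(q,c) \<in> E" by (meson tranclD2)
    have "tree_node N c" using cc in_clade_tree by blast
    then have "q = p" using tree_par q(2) pc by blast
    then have "Cl p" using r'(1) q(1) unfolding in_clade_def desc_def by blast
    then show False using np by simp
  qed
  then show ?thesis unfolding max_clade_root_def using crc by simp
qed

lemma mcr_parent: assumes pr: "(p,r) \<in> E" and mr: "MR r" shows "\<not> Cl p"
proof
  assume "Cl p"
  then obtain r'' where r'': "clade_root N r''" "(r'',p) \<in> E\<^sup>*" unfolding in_clade_def desc_def by auto
  then have rr: "(r'',r) \<in> E\<^sup>*" using pr by simp
  show False
  proof (cases "r'' = r")
    case True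
    then have "(r,r) \<in> E\<^sup>+" using r''(2) pr by (simp add: rtrancl_into_trancl1)
    then show False using acyc unfolding acyclic_def by blast
  next
    case False
    then show False using mr r''(1) rr unfolding max_clade_root_def desc_def by blast
  qed
qed

lemma SA_iff: "(x,y) \<in> SA \<longleftrightarrow>
   (\<exists>u v. x = Inl u \<and> y = Inl v \<and> (u,v) \<in> E \<and> \<not> Cl u \<and> \<not> Cl v) \<or>
   (\<exists>p r. x = Inl p \<and> y = Inr r \<and> (p,r) \<in> E \<and> MR r)"
  unfolding star_arcs_def by blast

lemma SA_LL: "(Inl u, Inl v) \<in> SA \<longleftrightarrow> (u,v) \<in> E \<and> \<not> Cl u \<and> \<not> Cl v"
  unfolding SA_iff by simp
lemma SA_LR: "(Inl u, Inr r) \<in> SA \<longleftrightarrow> (u,r) \<in> E \<and> MR r"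
  unfolding SA_iff by simp
lemma SA_R: "(Inr r, y) \<notin> SA"
  unfolding SA_iff by simp
lemma SA_RL: "(x, Inr r) \<in> SA \<Longrightarrow> \<exists>u. x = Inl u"
  unfolding SA_iff by auto

lemma SN_L: "Inl v \<in> star_nodes N \<longleftrightarrow> v \<in> V \<and> \<not> Cl v"
  unfolding star_nodes_def by auto
lemma SN_R: "Inr r \<in> star_nodes N \<longleftrightarrow> MR r"
  unfolding star_nodes_def by auto

lemma SI_L: "Inl v \<in> star_internal N \<longleftrightarrow> v \<in> V \<and> \<not> Cl v \<and> v \<notin> leaves N"
proof
  assume "Inl v \<in> star_internal N"
  then obtain y where y: "(Inl v, y) \<in> SA" "Inl v \<in> star_nodes N" unfolding star_internal_def by auto
  from y(1) have "\<exists>w. (v,w) \<in> E" unfolding SA_iff by auto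
  then show "v \<in> V \<and> \<not> Cl v \<and> v \<notin> leaves N" using y(2) SN_L leaf_iff by auto
next
  assume a: "v \<in> V \<and> \<not> Cl v \<and> v \<notin> leaves N"
  then obtain c where c: "(v,c) \<in> E" using leaf_iff by auto
  have "\<exists>y. (Inl v, y) \<in> SA"
  proof (cases "Cl c")
    case True
    then have "MR c" using clade_child_mcr c a by blast
    then show ?thesis using c SA_LR by blast
  next
    case False
    then show ?thesis using c a SA_LL by blast
  qed
  then show "Inl v \<in> star_internal N" unfolding star_internal_def using a SN_L by blast
qed

lemma SI_R: "Inr r \<notin> star_internal N"
  unfolding star_internal_def using SA_R by blast

lemma SL_L: "Inl v \<in> star_leaves N \<longleftrightarrow> v \<in> leaves N \<and> \<not> Cl v"
proof -
  have "Inl v \<in> star_leaves N \<longleftrightarrow> Inl v \<in> star_nodes N \<and> Inl v \<notin> star_internal N"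
    unfolding star_leaves_def star_internal_def by blast
  then show ?thesis using SN_L SI_L leaf_iff by auto
qed

lemma SL_R: "Inr r \<in> star_leaves N \<longleftrightarrow> MR r"
  unfolding star_leaves_def using SN_R SA_R by blast

lemma R0_iff: "x \<in> removed0 N \<longleftrightarrow> (\<exists>d. x = Inl d \<and> Dn d)"
proof
  assume "x \<in> removed0 N"
  then obtain v where v: "x = Inl v" "x \<in> star_internal N" "\<exists>w. w \<in> V \<and> w \<noteq> v \<and> convergent N v w"
    unfolding removed0_def by blast
  then have "Dn v" unfolding Dn_def using SI_L by blast
  then show "\<exists>d. x = Inl d \<and> Dn d" using v by blast
next
  assume "\<exists>d. x = Inl d \<and> Dn d"
  then obtain d where d: "x = Inl d" "Dn d" by blast
  then have "x \<in> star_internal N" using SI_L unfolding Dn_def by blast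
  then show "x \<in> removed0 N" unfolding removed0_def using d unfolding Dn_def by blast
qed

definition starP :: "'v \<Rightarrow> 'v + 'v \<Rightarrow> bool" where
  "starP d y = (case y of Inl v \<Rightarrow> (d,v) \<in> E\<^sup>+ \<and> \<not> Cl v | Inr r \<Rightarrow> (d,r) \<in> E\<^sup>+ \<and> MR r)"

lemma SA_trancl: "(Inl d, y) \<in> SA\<^sup>+ \<Longrightarrow> starP d y"
proof (induction rule: trancl_induct)
  case (base y)
  then show ?case unfolding SA_iff starP_def by auto
next
  case (step y z)
  from step(2) obtain w where w: "y = Inl w" unfolding SA_iff by auto
  then have dw: "(d,w) \<in> E\<^sup>+" using step(3) unfolding starP_def by simp
  from step(2) w show ?case unfolding SA_iff starP_def using dw
    by (auto intro: trancl_into_trancl)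
qed

lemma E_SA_LL: "(d,v) \<in> E\<^sup>+ \<Longrightarrow> \<not> Cl d \<Longrightarrow> \<not> Cl v \<Longrightarrow> (Inl d, Inl v) \<in> SA\<^sup>+"
proof (induction rule: trancl_induct)
  case (base y) then show ?case using SA_LL by blast
next
  case (step y z)
  have "\<not> Cl y" using step(2,5) in_clade_arc by blast
  then show ?case using step SA_LL by (meson trancl.trancl_into_trancl)
qed

lemma E_SA_LR: assumes "(d,r) \<in> E\<^sup>+" "\<not> Cl d" "MR r" shows "(Inl d, Inr r) \<in> SA\<^sup>+"
proof -
  obtain p where p: "(d,p) \<in> E\<^sup>*" "(p,r) \<in> E" using assms(1) by (meson tranclD2)
  have np: "\<not> Cl p" using mcr_parent p(2) assms(3) by blast
  have pr: "(Inl p, Inr r) \<in> SA" using SA_LR p(2) assms(3) by blast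
  show ?thesis
  proof (cases "d = p")
    case True then show ?thesis using pr by auto
  next
    case False
    then have "(d,p) \<in> E\<^sup>+" using p(1) by (simp add: rtrancl_eq_or_trancl)
    then have "(Inl d, Inl p) \<in> SA\<^sup>+" using E_SA_LL assms(2) np by blast
    then show ?thesis using pr by (meson trancl.trancl_into_trancl)
  qed
qed

lemma Rm_notCl: "Rm v \<Longrightarrow> \<not> Cl v" unfolding Rm_def by simp
lemma Dn_Rm: "Dn d \<Longrightarrow> Rm d" unfolding Rm_def using Dn_def by auto

lemma RM_L: "Inl v \<in> removed N \<longleftrightarrow> Rm v"
proof
  assume "Inl v \<in> removed N"
  then consider "Inl v \<in> removed0 N" |
     "Inl v \<in> star_internal N" "\<exists>d\<in>removed0 N. (d, Inl v) \<in> SA\<^sup>+"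
    unfolding removed_def by blast
  then show "Rm v"
  proof cases
    case 1
    then have "Dn v" using R0_iff[of "Inl v"] by simp
    then show ?thesis by (rule Dn_Rm)
  next
    case 2
    then obtain x where x: "x \<in> removed0 N" "(x, Inl v) \<in> SA\<^sup>+" by blast
    then obtain d where d: "x = Inl d" "Dn d" using R0_iff[of x] by blast
    then have "starP d (Inl v)" using SA_trancl x(2) by simp
    then have dv: "(d,v) \<in> E\<^sup>*" unfolding starP_def by (simp add: trancl_into_rtrancl)
    have "v \<in> V \<and> \<not> Cl v \<and> v \<notin> leaves N" using 2(1) SI_L by simp
    then show ?thesis unfolding Rm_def using d(2) dv by blast
  qed
next
  assume r: "Rm v"
  then obtain d where d: "Dn d" "(d,v) \<in> E\<^sup>*" unfolding Rm_def by blast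
  have i0: "Inl d \<in> removed0 N" using R0_iff[of "Inl d"] d(1) by simp
  show "Inl v \<in> removed N"
  proof (cases "d = v")
    case True then show ?thesis using i0 unfolding removed_def by simp
  next
    case False
    then have "(d,v) \<in> E\<^sup>+" using d(2) by (simp add: rtrancl_eq_or_trancl)
    moreover have "\<not> Cl d" using d(1) unfolding Dn_def by simp
    moreover have "\<not> Cl v" using r by (rule Rm_notCl)
    ultimately have t: "(Inl d, Inl v) \<in> SA\<^sup>+" by (rule E_SA_LL)
    have "v \<in> V \<and> \<not> Cl v \<and> v \<notin> leaves N" using r unfolding Rm_def by simp
    then have "Inl v \<in> star_internal N" using SI_L by simp
    then show ?thesis using t i0 unfolding removed_def by blast
  qed
qed

lemma RM_R: "Inr r \<notin> removed N"
  unfolding removed_def removed0_def using SI_R by blast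

lemma S3N_L: "Inl v \<in> step3_nodes N \<longleftrightarrow> v \<in> V \<and> \<not> Rm v"
  unfolding step3_nodes_def using SN_L RM_L Rm_notCl by auto

lemma S3N_R: "Inr r \<in> step3_nodes N \<longleftrightarrow> MR r"
  unfolding step3_nodes_def using SN_R RM_R by auto

lemma SAs_LL: "\<not> Cl c \<Longrightarrow> \<not> Cl v \<Longrightarrow> (Inl c, Inl v) \<in> SA\<^sup>* \<longleftrightarrow> (c,v) \<in> E\<^sup>*"
proof
  assume a: "\<not> Cl c" "\<not> Cl v" "(Inl c, Inl v) \<in> SA\<^sup>*"
  show "(c,v) \<in> E\<^sup>*"
  proof (cases "c = v")
    case False
    then have "(Inl c, Inl v) \<in> SA\<^sup>+" using a(3) by (simp add: rtrancl_eq_or_trancl)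
    then have "starP c (Inl v)" by (rule SA_trancl)
    then show ?thesis unfolding starP_def by (simp add: trancl_into_rtrancl)
  qed simp
next
  assume a: "\<not> Cl c" "\<not> Cl v" "(c,v) \<in> E\<^sup>*"
  show "(Inl c, Inl v) \<in> SA\<^sup>*"
  proof (cases "c = v")
    case False
    then have "(c,v) \<in> E\<^sup>+" using a(3) by (simp add: rtrancl_eq_or_trancl)
    then show ?thesis using E_SA_LL a by (blast intro: trancl_into_rtrancl)
  qed simp
qed

lemma SAs_LR: "\<not> Cl c \<Longrightarrow> (Inl c, Inr r) \<in> SA\<^sup>* \<longleftrightarrow> (c,r) \<in> E\<^sup>* \<and> MR r"
proof
  assume a: "\<not> Cl c" "(Inl c, Inr r) \<in> SA\<^sup>*"
  then have "(Inl c, Inr r) \<in> SA\<^sup>+" by (simp add: rtrancl_eq_or_trancl)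
  then have "starP c (Inr r)" by (rule SA_trancl)
  then show "(c,r) \<in> E\<^sup>* \<and> MR r" unfolding starP_def by (simp add: trancl_into_rtrancl)
next
  assume a: "\<not> Cl c" "(c,r) \<in> E\<^sup>* \<and> MR r"
  then have "c \<noteq> r" using mcr_Cl by blast
  then have "(c,r) \<in> E\<^sup>+" using a(2) by (simp add: rtrancl_eq_or_trancl)
  then show "(Inl c, Inr r) \<in> SA\<^sup>*" using E_SA_LR a by (blast intro: trancl_into_rtrancl)
qed

end


context pn begin

abbreviation "A3 \<equiv> step3_arcs N"
abbreviation "V3 \<equiv> step3_nodes N"

lemma S3A_iff: "(x,y) \<in> A3 \<longleftrightarrow>
   ((x,y) \<in> SA \<and> x \<notin> removed N \<and> y \<notin> removed N) \<or>
   (\<exists>v. x \<in> star_nodes N - removed N \<and> v \<in> removed N \<and> (x,v) \<in> SA \<and> y \<in> star_leaves N \<and> (v,y) \<in> SA\<^sup>*) \<or>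
   (\<exists>r. x = Inr r \<and> y = Inl r \<and> MR r) \<or>
   (\<exists>u v. x = Inl u \<and> y = Inl v \<and> (u,v) \<in> E \<and> Cl u \<and> Cl v)"
  unfolding step3_arcs_def by blast

lemma S2_L: "(\<exists>vv. Inl u \<in> star_nodes N - removed N \<and> vv \<in> removed N \<and> (Inl u,vv) \<in> SA \<and> y \<in> star_leaves N \<and> (vv,y) \<in> SA\<^sup>*)
   \<longleftrightarrow> u \<in> V \<and> \<not> Cl u \<and> \<not> Rm u \<and> y \<in> star_leaves N \<and> (\<exists>c. (u,c) \<in> E \<and> Rm c \<and> (Inl c, y) \<in> SA\<^sup>*)"
proof
  assume "\<exists>vv. Inl u \<in> star_nodes N - removed N \<and> vv \<in> removed N \<and> (Inl u,vv) \<in> SA \<and> y \<in> star_leaves N \<and> (vv,y) \<in> SA\<^sup>*"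
  then obtain vv where vv: "Inl u \<in> star_nodes N" "Inl u \<notin> removed N" "vv \<in> removed N" "(Inl u,vv) \<in> SA"
     "y \<in> star_leaves N" "(vv,y) \<in> SA\<^sup>*" by blast
  obtain c where c: "vv = Inl c" using vv(3) RM_R by (cases vv) auto
  have "Rm c" using vv(3) c RM_L by simp
  moreover have "(u,c) \<in> E" using vv(4) c SA_LL by simp
  moreover have "u \<in> V \<and> \<not> Cl u" using vv(1) SN_L by simp
  moreover have "\<not> Rm u" using vv(2) RM_L by simp
  ultimately show "u \<in> V \<and> \<not> Cl u \<and> \<not> Rm u \<and> y \<in> star_leaves N \<and> (\<exists>c. (u,c) \<in> E \<and> Rm c \<and> (Inl c, y) \<in> SA\<^sup>*)"
    using vv(5,6) c by blast
next
  assume a: "u \<in> V \<and> \<not> Cl u \<and> \<not> Rm u \<and> y \<in> star_leaves N \<and> (\<exists>c. (u,c) \<in> E \<and> Rm c \<and> (Inl c, y) \<in> SA\<^sup>*)"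
  then obtain c where c: "(u,c) \<in> E" "Rm c" "(Inl c, y) \<in> SA\<^sup>*" by blast
  have "Inl u \<in> star_nodes N" using a SN_L by simp
  moreover have "Inl u \<notin> removed N" using a RM_L by simp
  moreover have "Inl c \<in> removed N" using c(2) RM_L by simp
  moreover have "(Inl u, Inl c) \<in> SA" using SA_LL c(1) a Rm_notCl[OF c(2)] by simp
  ultimately show "\<exists>vv. Inl u \<in> star_nodes N - removed N \<and> vv \<in> removed N \<and> (Inl u,vv) \<in> SA \<and> y \<in> star_leaves N \<and> (vv,y) \<in> SA\<^sup>*"
    using a c(3) by blast
qed

lemma S2_R: "\<not> (\<exists>vv. Inr r \<in> star_nodes N - removed N \<and> vv \<in> removed N \<and> (Inr r,vv) \<in> SA \<and> y \<in> star_leaves N \<and> (vv,y) \<in> SA\<^sup>*)"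
  using SA_R by blast

lemma S3A_LL: "(Inl u, Inl v) \<in> A3 \<longleftrightarrow>
   ((u,v) \<in> E \<and> \<not> Cl u \<and> \<not> Cl v \<and> \<not> Rm u \<and> \<not> Rm v) \<or>
   (u \<in> V \<and> \<not> Cl u \<and> \<not> Rm u \<and> v \<in> leaves N \<and> \<not> Cl v \<and> (\<exists>c. (u,c) \<in> E \<and> Rm c \<and> (c,v) \<in> E\<^sup>*)) \<or>
   ((u,v) \<in> E \<and> Cl u \<and> Cl v)"
proof -
  have 1: "((Inl u, Inl v) \<in> SA \<and> Inl u \<notin> removed N \<and> Inl v \<notin> removed N) \<longleftrightarrow>
      ((u,v) \<in> E \<and> \<not> Cl u \<and> \<not> Cl v \<and> \<not> Rm u \<and> \<not> Rm v)"
    using SA_LL RM_L by simp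
  have 2: "(\<exists>c. (u,c) \<in> E \<and> Rm c \<and> (Inl c, Inl v) \<in> SA\<^sup>*) \<longleftrightarrow> (\<exists>c. (u,c) \<in> E \<and> Rm c \<and> (c,v) \<in> E\<^sup>*)"
    if "\<not> Cl v" using SAs_LL Rm_notCl that by blast
  have 3: "(u \<in> V \<and> \<not> Cl u \<and> \<not> Rm u \<and> Inl v \<in> star_leaves N \<and> (\<exists>c. (u,c) \<in> E \<and> Rm c \<and> (Inl c, Inl v) \<in> SA\<^sup>*))
    \<longleftrightarrow> (u \<in> V \<and> \<not> Cl u \<and> \<not> Rm u \<and> v \<in> leaves N \<and> \<not> Cl v \<and> (\<exists>c. (u,c) \<in> E \<and> Rm c \<and> (c,v) \<in> E\<^sup>*))"
    using 2 SL_L by blast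
  show ?thesis unfolding S3A_iff[of "Inl u" "Inl v"] S2_L 1 3 by blast
qed

lemma S3A_LR: "(Inl u, Inr r) \<in> A3 \<longleftrightarrow>
   ((u,r) \<in> E \<and> MR r \<and> \<not> Rm u) \<or>
   (u \<in> V \<and> \<not> Cl u \<and> \<not> Rm u \<and> MR r \<and> (\<exists>c. (u,c) \<in> E \<and> Rm c \<and> (c,r) \<in> E\<^sup>*))"
proof -
  have 1: "((Inl u, Inr r) \<in> SA \<and> Inl u \<notin> removed N \<and> Inr r \<notin> removed N) \<longleftrightarrow>
      ((u,r) \<in> E \<and> MR r \<and> \<not> Rm u)"
    using SA_LR RM_L RM_R by simp
  have 3: "(u \<in> V \<and> \<not> Cl u \<and> \<not> Rm u \<and> Inr r \<in> star_leaves N \<and> (\<exists>c. (u,c) \<in> E \<and> Rm c \<and> (Inl c, Inr r) \<in> SA\<^sup>*))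
    \<longleftrightarrow> (u \<in> V \<and> \<not> Cl u \<and> \<not> Rm u \<and> MR r \<and> (\<exists>c. (u,c) \<in> E \<and> Rm c \<and> (c,r) \<in> E\<^sup>*))"
    using SAs_LR Rm_notCl SL_R by blast
  show ?thesis unfolding S3A_iff[of "Inl u" "Inr r"] S2_L 1 3 by blast
qed

lemma S3A_RL: "(Inr r, Inl v) \<in> A3 \<longleftrightarrow> v = r \<and> MR r"
  unfolding S3A_iff[of "Inr r" "Inl v"] using SA_R S2_R by blast

lemma S3A_RR: "(Inr r, Inr r') \<notin> A3"
  unfolding S3A_iff[of "Inr r" "Inr r'"] using SA_R S2_R by blast

lemma S3A_sub: "A3 \<subseteq> V3 \<times> V3"
proof (clarify)
  fix x y assume a: "(x,y) \<in> A3"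
  show "x \<in> V3 \<and> y \<in> V3"
  proof (cases x; cases y)
    fix u v assume xy: "x = Inl u" "y = Inl v"
    then have "(Inl u, Inl v) \<in> A3" using a by simp
    then have "u \<in> V \<and> v \<in> V \<and> \<not> Rm u \<and> \<not> Rm v"
      unfolding S3A_LL using arcV1 arcV2 Rm_notCl rtr_V leaf_iff Rm_def by blast
    then show ?thesis using xy S3N_L by simp
  next
    fix u r assume xy: "x = Inl u" "y = Inr r"
    then have "(Inl u, Inr r) \<in> A3" using a by simp
    then have "u \<in> V \<and> \<not> Rm u \<and> MR r" unfolding S3A_LR using arcV1 by blast
    then show ?thesis using xy S3N_L S3N_R by simp
  next
    fix r v assume xy: "x = Inr r" "y = Inl v"
    then have "v = r \<and> MR r" using a S3A_RL by simp
    then have "MR r \<and> v \<in> V \<and> \<not> Rm v" using mcr_V mcr_Cl Rm_notCl by blast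
    then show ?thesis using xy S3N_L S3N_R by simp
  next
    fix r r' assume xy: "x = Inr r" "y = Inr r'"
    then show ?thesis using a S3A_RR by simp
  qed
qed

definition rk :: "'v + 'v \<Rightarrow> nat" where
  "rk x = (case x of Inl v \<Rightarrow> 2 * dep (\<ll> v) | Inr r \<Rightarrow> 2 * dep (\<ll> r) + 1)"

lemma dep_rtr: "(c,v) \<in> E\<^sup>* \<Longrightarrow> dep (\<ll> v) \<le> dep (\<ll> c)"
  using dep_trancl by (metis le_less rtrancl_eq_or_trancl)

lemma rk_A3: "(x,y) \<in> A3 \<Longrightarrow> rk y < rk x"
proof (cases x; cases y)
  fix u v assume xy: "x = Inl u" "y = Inl v" and a: "(x,y) \<in> A3"
  then have "(Inl u, Inl v) \<in> A3" by simp
  then have "dep (\<ll> v) < dep (\<ll> u)"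
    unfolding S3A_LL using dep_arc dep_rtr le_less_trans by blast
  then show ?thesis using xy unfolding rk_def by simp
next
  fix u r assume xy: "x = Inl u" "y = Inr r" and a: "(x,y) \<in> A3"
  then have "(Inl u, Inr r) \<in> A3" by simp
  then have "dep (\<ll> r) < dep (\<ll> u)"
    unfolding S3A_LR using dep_arc dep_rtr le_less_trans by blast
  then show ?thesis using xy unfolding rk_def by simp
next
  fix r v assume xy: "x = Inr r" "y = Inl v" and a: "(x,y) \<in> A3"
  then have "v = r" using S3A_RL by simp
  then show ?thesis using xy unfolding rk_def by simp
next
  fix r r' assume xy: "x = Inr r" "y = Inr r'" and a: "(x,y) \<in> A3"
  then show ?thesis using S3A_RR by simp
qed

lemma below_leaf: "c \<in> V \<Longrightarrow> \<not> Cl c \<Longrightarrow>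
  (\<exists>h. h \<in> leaves N \<and> \<not> Cl h \<and> (c,h) \<in> E\<^sup>*) \<or> (\<exists>r. MR r \<and> (c,r) \<in> E\<^sup>*)"
proof (induction c rule: wf_induct_rule[OF wfE])
  case (1 c)
  show ?case
  proof (cases "c \<in> leaves N")
    case True then show ?thesis using 1 by blast
  next
    case False
    then obtain c' where c': "(c,c') \<in> E" using leaf_iff 1(2) by blast
    show ?thesis
    proof (cases "Cl c'")
      case True
      then have "MR c'" using clade_child_mcr c' 1(3) by blast
      then show ?thesis using c' by blast
    next
      case False
      have "(c',c) \<in> E\<inverse>" "c' \<in> V" using c' arcV2 by auto
      then have "(\<exists>h. h \<in> leaves N \<and> \<not> Cl h \<and> (c',h) \<in> E\<^sup>*) \<or> (\<exists>r. MR r \<and> (c',r) \<in> E\<^sup>*)"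
        using 1(1) False by blast
      then show ?thesis using c' by (meson converse_rtrancl_into_rtrancl)
    qed
  qed
qed

lemma internal_out: assumes v: "Inl v \<in> V3" "v \<notin> leaves N" shows "\<exists>c. (Inl v, c) \<in> A3"
proof -
  have vV: "v \<in> V" and nr: "\<not> Rm v" using v S3N_L by auto
  obtain c where c: "(v,c) \<in> E" using leaf_iff vV v(2) by blast
  show ?thesis
  proof (cases "Cl v")
    case True
    then have "Cl c" using in_clade_arc c by blast
    then have "(Inl v, Inl c) \<in> A3" unfolding S3A_LL using c True by blast
    then show ?thesis by blast
  next
    case nc: False
    show ?thesis
    proof (cases "Cl c")
      case True
      then have "MR c" using clade_child_mcr c nc by blast
      then have "(Inl v, Inr c) \<in> A3" unfolding S3A_LR using c nr by blast
      then show ?thesis by blast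
    next
      case ncc: False
      show ?thesis
      proof (cases "Rm c")
        case False
        then have "(Inl v, Inl c) \<in> A3" unfolding S3A_LL using c nc ncc nr by blast
        then show ?thesis by blast
      next
        case True
        have cV: "c \<in> V" using c arcV2 by blast
        from below_leaf[OF cV ncc] show ?thesis
        proof
          assume "\<exists>h. h \<in> leaves N \<and> \<not> Cl h \<and> (c,h) \<in> E\<^sup>*"
          then obtain h where h: "h \<in> leaves N" "\<not> Cl h" "(c,h) \<in> E\<^sup>*" by blast
          then have "(Inl v, Inl h) \<in> A3" unfolding S3A_LL using c nc nr vV True by blast
          then show ?thesis by blast
        next
          assume "\<exists>r. MR r \<and> (c,r) \<in> E\<^sup>*"
          then obtain r where r: "MR r" "(c,r) \<in> E\<^sup>*" by blast
          then have "(Inl v, Inr r) \<in> A3" unfolding S3A_LR using c nc nr vV True by blast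
          then show ?thesis by blast
        qed
      qed
    qed
  qed
qed

end


definition isN :: "'s nlabel \<Rightarrow> bool" where
  "isN K = (case K of NLeaf _ \<Rightarrow> False | NNode _ \<Rightarrow> True)"

definition convl :: "'s nlabel multiset \<Rightarrow> 's nlabel \<Rightarrow> bool" where
  "convl UU K \<longleftrightarrow> 2 \<le> size (filter_mset (\<lambda>K'. lcl K' = lcl K) UU)"

definition Dl :: "'s nlabel multiset \<Rightarrow> 's nlabel \<Rightarrow> bool" where
  "Dl UU K \<longleftrightarrow> isN K \<and> \<not> inCl UU K \<and> convl UU K"

definition Rml :: "'s nlabel multiset \<Rightarrow> 's nlabel \<Rightarrow> bool" where
  "Rml UU K \<longleftrightarrow> isN K \<and> \<not> inCl UU K \<and> (\<exists>K'. K' \<in># UU \<and> Dl UU K' \<and> K \<in> sub K')"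

lemma card_ge2: "finite A \<Longrightarrow> v \<in> A \<Longrightarrow> 2 \<le> card A \<longleftrightarrow> (\<exists>w\<in>A. w \<noteq> v)"
proof -
  assume a: "finite A" "v \<in> A"
  have "2 \<le> card A \<longleftrightarrow> \<not> card A \<le> Suc 0" by auto
  also have "\<dots> \<longleftrightarrow> \<not> (\<forall>x\<in>A. \<forall>y\<in>A. x = y)" using card_le_Suc0_iff_eq[OF a(1)] by simp
  also have "\<dots> \<longleftrightarrow> (\<exists>w\<in>A. w \<noteq> v)" using a(2) by metis
  finally show ?thesis .
qed

context pn begin

lemma isN_iff: "v \<in> V \<Longrightarrow> isN (\<ll> v) \<longleftrightarrow> v \<notin> leaves N"
  by (cases "v \<in> leaves N") (simp_all add: nl_leaf nl_node' isN_def)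

lemma size_filter: "size (filter_mset P U) = card {w \<in> V. P (\<ll> w)}"
  unfolding Upsilon_def using finV by (simp add: filter_mset_image_mset filter_mset_mset_set)

lemma conv_iff: "v \<in> V \<Longrightarrow> (\<exists>w\<in>V. w \<noteq> v \<and> convergent N v w) \<longleftrightarrow> convl U (\<ll> v)"
proof -
  assume v: "v \<in> V"
  let ?A = "{w \<in> V. lcl (\<ll> w) = lcl (\<ll> v)}"
  have fin: "finite ?A" using finV by simp
  have "convl U (\<ll> v) \<longleftrightarrow> 2 \<le> card ?A" unfolding convl_def size_filter by simp
  also have "\<dots> \<longleftrightarrow> (\<exists>w\<in>?A. w \<noteq> v)" using card_ge2[OF fin] v by simp
  also have "\<dots> \<longleftrightarrow> (\<exists>w\<in>V. w \<noteq> v \<and> convergent N v w)"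
    unfolding convergent_def using cluster_lcl v by auto
  finally show ?thesis by simp
qed

lemma Dn_iff: "Dn d \<longleftrightarrow> d \<in> V \<and> Dl U (\<ll> d)"
proof (cases "d \<in> V")
  case True
  show ?thesis unfolding Dn_def Dl_def using True isN_iff[OF True] conv_iff[OF True] in_clade_iff[of d] by auto
qed (simp add: Dn_def)

lemma Rm_iff: "Rm v \<longleftrightarrow> v \<in> V \<and> Rml U (\<ll> v)"
proof
  assume r: "Rm v"
  then obtain d where d: "Dn d" "(d,v) \<in> E\<^sup>*" unfolding Rm_def by blast
  have dV: "d \<in> V" and dl: "Dl U (\<ll> d)" using d(1) Dn_iff by auto
  have "\<ll> d \<in># U" using dV inU by blast
  moreover have "\<ll> v \<in> sub (\<ll> d)" using desc_sub d(2) by simp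
  moreover have vV: "v \<in> V" and "isN (\<ll> v)" and "\<not> inCl U (\<ll> v)"
    using r isN_iff in_clade_iff unfolding Rm_def by auto
  ultimately show "v \<in> V \<and> Rml U (\<ll> v)" unfolding Rml_def using dl by blast
next
  assume a: "v \<in> V \<and> Rml U (\<ll> v)"
  then have vV: "v \<in> V" and nl: "v \<notin> leaves N" and nc: "\<not> Cl v"
    using isN_iff in_clade_iff unfolding Rml_def by auto
  from a obtain K' where K': "K' \<in># U" "Dl U K'" "\<ll> v \<in> sub K'" unfolding Rml_def by blast
  then obtain d where d: "d \<in> V" "\<ll> d = K'" using inU by blast
  then have Dd: "Dn d" using Dn_iff K'(2) by simp
  obtain w where w: "(d,w) \<in> E\<^sup>*" "\<ll> w = \<ll> v" using sub_desc d K'(3) by blast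
  show "Rm v"
  proof (cases "w = v")
    case True
    then show ?thesis unfolding Rm_def using vV nl nc Dd w(1) by blast
  next
    case False
    have wV: "w \<in> V" using rtr_V w(1) d(1) by blast
    then have "convergent N v w" unfolding convergent_def using cluster_lcl vV w(2) by simp
    then have "Dn v" unfolding Dn_def using vV nc nl wV False by blast
    then show ?thesis by (rule Dn_Rm)
  qed
qed

lemma V3_uq: assumes v: "v \<in> V" "\<not> Rm v" shows "uq v"
proof (cases "Cl v")
  case True then show ?thesis by (rule clade_uq)
next
  case nc: False
  show ?thesis
  proof (cases "v \<in> leaves N")
    case True then show ?thesis by (rule leaf_uq)
  next
    case False
    have "\<not> Dn v" using v Dn_Rm by blast
    then have "\<not> (\<exists>w\<in>V. w \<noteq> v \<and> convergent N v w)" unfolding Dn_def using v nc False by blast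
    then show ?thesis unfolding uq_def convergent_def using cluster_lcl v(1) by metis
  qed
qed

lemma arc_uq: "uq v \<Longrightarrow> (u,v) \<in> E \<longleftrightarrow> u \<in> V \<and> \<ll> v \<in># chm (\<ll> u)"
proof
  assume "(u,v) \<in> E" then show "u \<in> V \<and> \<ll> v \<in># chm (\<ll> u)" using arcV1 arc_chm by blast
next
  assume a: "uq v" "u \<in> V \<and> \<ll> v \<in># chm (\<ll> u)"
  then obtain c where c: "(u,c) \<in> E" "\<ll> c = \<ll> v" using chm_arc by blast
  then have "c = v" using a(1) arcV2 unfolding uq_def by metis
  then show "(u,v) \<in> E" using c by simp
qed

lemma rtr_uq: "uq v \<Longrightarrow> u \<in> V \<Longrightarrow> (u,v) \<in> E\<^sup>* \<longleftrightarrow> \<ll> v \<in> sub (\<ll> u)"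
proof
  assume "(u,v) \<in> E\<^sup>*" then show "\<ll> v \<in> sub (\<ll> u)" by (rule desc_sub)
next
  assume a: "uq v" "u \<in> V" "\<ll> v \<in> sub (\<ll> u)"
  then obtain w where w: "(u,w) \<in> E\<^sup>*" "\<ll> w = \<ll> v" using sub_desc by blast
  then have "w = v" using a rtr_V unfolding uq_def by metis
  then show "(u,v) \<in> E\<^sup>*" using w by simp
qed

lemma exc_uq: "uq v \<Longrightarrow> u \<in> V \<Longrightarrow>
  (\<exists>c. (u,c) \<in> E \<and> Rm c \<and> (c,v) \<in> E\<^sup>*) \<longleftrightarrow> (\<exists>K. K \<in># chm (\<ll> u) \<and> Rml U K \<and> \<ll> v \<in> sub K)"
proof
  assume a: "uq v" "u \<in> V" "\<exists>c. (u,c) \<in> E \<and> Rm c \<and> (c,v) \<in> E\<^sup>*"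
  then obtain c where c: "(u,c) \<in> E" "Rm c" "(c,v) \<in> E\<^sup>*" by blast
  then show "\<exists>K. K \<in># chm (\<ll> u) \<and> Rml U K \<and> \<ll> v \<in> sub K"
    using arc_chm Rm_iff desc_sub by blast
next
  assume a: "uq v" "u \<in> V" "\<exists>K. K \<in># chm (\<ll> u) \<and> Rml U K \<and> \<ll> v \<in> sub K"
  then obtain K where K: "K \<in># chm (\<ll> u)" "Rml U K" "\<ll> v \<in> sub K" by blast
  then obtain c where c: "(u,c) \<in> E" "\<ll> c = K" using chm_arc a(2) by blast
  have cV: "c \<in> V" using c arcV2 by blast
  have "Rm c" using Rm_iff cV c(2) K(2) by simp
  moreover have "(c,v) \<in> E\<^sup>*" using rtr_uq[OF a(1) cV] c(2) K(3) by simp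
  ultimately show "\<exists>c. (u,c) \<in> E \<and> Rm c \<and> (c,v) \<in> E\<^sup>*" using c(1) by blast
qed

end


definition tgN :: "('v, 's) net \<Rightarrow> 'v + 'v \<Rightarrow> bool \<times> 's nlabel" where
  "tgN N x = (case x of Inl v \<Rightarrow> (False, nested_label N v) | Inr r \<Rightarrow> (True, nested_label N r))"

definition ArcLL :: "'s nlabel multiset \<Rightarrow> 's nlabel \<Rightarrow> 's nlabel \<Rightarrow> bool" where
  "ArcLL UU A B \<longleftrightarrow>
    (B \<in># chm A \<and> \<not> inCl UU A \<and> \<not> inCl UU B \<and> \<not> Rml UU A \<and> \<not> Rml UU B) \<or>
    (\<not> inCl UU A \<and> \<not> Rml UU A \<and> \<not> isN B \<and> \<not> inCl UU B \<and> (\<exists>K. K \<in># chm A \<and> Rml UU K \<and> B \<in> sub K)) \<or>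
    (B \<in># chm A \<and> inCl UU A \<and> inCl UU B)"

definition ArcLR :: "'s nlabel multiset \<Rightarrow> 's nlabel \<Rightarrow> 's nlabel \<Rightarrow> bool" where
  "ArcLR UU A R \<longleftrightarrow>
    (R \<in># chm A \<and> MRl UU R \<and> \<not> Rml UU A) \<or>
    (\<not> inCl UU A \<and> \<not> Rml UU A \<and> MRl UU R \<and> (\<exists>K. K \<in># chm A \<and> Rml UU K \<and> R \<in> sub K))"

fun A3l :: "'s nlabel multiset \<Rightarrow> bool \<times> 's nlabel \<Rightarrow> bool \<times> 's nlabel \<Rightarrow> bool" where
  "A3l UU (False, A) (False, B) = ArcLL UU A B"
| "A3l UU (False, A) (True, B) = ArcLR UU A B"
| "A3l UU (True, A) (False, B) = (B = A \<and> MRl UU A)"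
| "A3l UU (True, A) (True, B) = False"

definition N3l :: "'s nlabel multiset \<Rightarrow> (bool \<times> 's nlabel) set" where
  "N3l UU = {(False, A) | A. A \<in># UU \<and> \<not> Rml UU A} \<union> {(True, R) | R. R \<in># UU \<and> MRl UU R}"

context pn begin

lemma tgL: "tgN N (Inl v) = (False, \<ll> v)" unfolding tgN_def by simp
lemma tgR: "tgN N (Inr r) = (True, \<ll> r)" unfolding tgN_def by simp

lemma mcr_uq: "MR r \<Longrightarrow> uq r" using mcr_Cl clade_uq by blast

lemma nRm_iff: "v \<in> V \<Longrightarrow> \<not> Rm v \<longleftrightarrow> \<not> Rml U (\<ll> v)" using Rm_iff by simp

lemma V3_img: "tgN N ` V3 = N3l U"
proof
  show "tgN N ` V3 \<subseteq> N3l U"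
  proof
    fix z assume "z \<in> tgN N ` V3"
    then obtain x where x: "x \<in> V3" "z = tgN N x" by blast
    show "z \<in> N3l U"
    proof (cases x)
      case (Inl v)
      then have v: "v \<in> V" "\<not> Rm v" using x S3N_L by auto
      then have "\<ll> v \<in># U" "\<not> Rml U (\<ll> v)" using inU nRm_iff by auto
      then show ?thesis using x Inl tgL unfolding N3l_def by simp
    next
      case (Inr r)
      then have "MR r" using x S3N_R by simp
      then have "r \<in> V" "MRl U (\<ll> r)" using mcr_iff by auto
      then have "\<ll> r \<in># U" "MRl U (\<ll> r)" using inU by auto
      then show ?thesis using x Inr tgR unfolding N3l_def by simp
    qed
  qed
next
  show "N3l U \<subseteq> tgN N ` V3"
  proof
    fix z assume "z \<in> N3l U"
    then consider A where "z = (False, A)" "A \<in># U" "\<not> Rml U A" |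
      R where "z = (True, R)" "R \<in># U" "MRl U R" unfolding N3l_def by blast
    then show "z \<in> tgN N ` V3"
    proof cases
      case 1
      then obtain v where v: "v \<in> V" "\<ll> v = A" using inU by blast
      then have "Inl v \<in> V3" using S3N_L nRm_iff 1 by simp
      then show ?thesis using 1 v tgL by (metis image_eqI)
    next
      case 2
      then obtain r where r: "r \<in> V" "\<ll> r = R" using inU by blast
      then have "Inr r \<in> V3" using S3N_R mcr_iff 2 by simp
      then show ?thesis using 2 r tgR by (metis image_eqI)
    qed
  qed
qed

lemma V3_uqL: "Inl v \<in> V3 \<Longrightarrow> uq v" using S3N_L V3_uq by blast
lemma V3_uqR: "Inr r \<in> V3 \<Longrightarrow> uq r" using S3N_R mcr_uq by blast

lemma V3_inj: "inj_on (tgN N) V3"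
proof (rule inj_onI)
  fix x y assume a: "x \<in> V3" "y \<in> V3" "tgN N x = tgN N y"
  show "x = y"
  proof (cases x; cases y)
    fix u v assume xy: "x = Inl u" "y = Inl v"
    then have "\<ll> u = \<ll> v" "uq u" "v \<in> V" using a tgL V3_uqL S3N_L by auto
    then show ?thesis using xy unfolding uq_def by metis
  next
    fix u v assume xy: "x = Inl u" "y = Inr v" then show ?thesis using a tgL tgR by simp
  next
    fix u v assume xy: "x = Inr u" "y = Inl v" then show ?thesis using a tgL tgR by simp
  next
    fix u v assume xy: "x = Inr u" "y = Inr v"
    then have "\<ll> u = \<ll> v" "uq u" "v \<in> V" using a tgR V3_uqR S3N_R mcr_V by auto
    then show ?thesis using xy unfolding uq_def by metis
  qed
qed

lemma A3_lab: assumes x: "x \<in> V3" and y: "y \<in> V3"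
  shows "(x,y) \<in> A3 \<longleftrightarrow> A3l U (tgN N x) (tgN N y)"
proof (cases x; cases y)
  fix u v assume xy: "x = Inl u" "y = Inl v"
  have u: "u \<in> V" "\<not> Rm u" "uq u" using x xy S3N_L V3_uqL by auto
  have v: "v \<in> V" "\<not> Rm v" "uq v" using y xy S3N_L V3_uqL by auto
  have e1: "(u,v) \<in> E \<longleftrightarrow> \<ll> v \<in># chm (\<ll> u)" using arc_uq[OF v(3)] u(1) by simp
  have e2: "Cl u \<longleftrightarrow> inCl U (\<ll> u)" "Cl v \<longleftrightarrow> inCl U (\<ll> v)" using in_clade_iff u(1) v(1) by auto
  have e3: "Rml U (\<ll> u) = False" "Rml U (\<ll> v) = False" using nRm_iff u v by auto
  have e4: "v \<in> leaves N \<longleftrightarrow> \<not> isN (\<ll> v)" using isN_iff v(1) by simp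
  have e5: "(\<exists>c. (u,c) \<in> E \<and> Rm c \<and> (c,v) \<in> E\<^sup>*) \<longleftrightarrow> (\<exists>K. K \<in># chm (\<ll> u) \<and> Rml U K \<and> \<ll> v \<in> sub K)"
    using exc_uq v(3) u(1) by simp
  show ?thesis unfolding xy tgL A3l.simps S3A_LL ArcLL_def e1 e2 e3 e4 e5 using u(1,2) v(2) by simp
next
  fix u r assume xy: "x = Inl u" "y = Inr r"
  have u: "u \<in> V" "\<not> Rm u" "uq u" using x xy S3N_L V3_uqL by auto
  have r: "MR r" "uq r" "r \<in> V" using y xy S3N_R V3_uqR mcr_V by auto
  have e1: "(u,r) \<in> E \<longleftrightarrow> \<ll> r \<in># chm (\<ll> u)" using arc_uq[OF r(2)] u(1) by simp
  have e2: "Cl u \<longleftrightarrow> inCl U (\<ll> u)" using in_clade_iff u(1) by auto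
  have e3: "Rml U (\<ll> u) = False" using nRm_iff u by auto
  have e4: "MRl U (\<ll> r) = True" using mcr_iff r by auto
  have e5: "(\<exists>c. (u,c) \<in> E \<and> Rm c \<and> (c,r) \<in> E\<^sup>*) \<longleftrightarrow> (\<exists>K. K \<in># chm (\<ll> u) \<and> Rml U K \<and> \<ll> r \<in> sub K)"
    using exc_uq r(2) u(1) by simp
  show ?thesis unfolding xy tgL tgR A3l.simps S3A_LR ArcLR_def e1 e2 e3 e4 e5 using u(1,2) r(1) by simp
next
  fix r v assume xy: "x = Inr r" "y = Inl v"
  have r: "MR r" "uq r" "r \<in> V" using x xy S3N_R V3_uqR mcr_V by auto
  have v: "v \<in> V" using y xy S3N_L by auto
  have e4: "MRl U (\<ll> r) = True" using mcr_iff r by auto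
  have "v = r \<longleftrightarrow> \<ll> v = \<ll> r" using r(2) v unfolding uq_def by metis
  then show ?thesis unfolding xy tgL tgR A3l.simps S3A_RL e4 using r(1) by simp
next
  fix r r' assume xy: "x = Inr r" "y = Inr r'"
  show ?thesis unfolding xy tgR A3l.simps using S3A_RR by simp
qed

end


definition el :: "'a set \<Rightarrow> ('a \<times> 'a) set \<Rightarrow> 'a set" where
  "el V A = {x \<in> V. card {y. (y,x) \<in> A} = 1 \<and> card {y. (x,y) \<in> A} = 1}"

definition rA :: "'a set \<Rightarrow> ('a \<times> 'a) set \<Rightarrow> ('a \<times> 'a) set" where
  "rA V A = {(a,b). a \<in> V - el V A \<and> b \<in> V - el V A \<and>
      (\<exists>c. (a,c) \<in> A \<and> (c,b) \<in> {(x,y) \<in> A. x \<in> el V A}\<^sup>*)}"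

lemma label_iso:
  assumes i1: "inj_on \<phi>1 V1" and i2: "inj_on \<phi>2 V2" and im: "\<phi>1 ` V1 = \<phi>2 ` V2"
    and a1: "\<forall>x\<in>V1. \<forall>y\<in>V1. (x,y) \<in> A1 \<longleftrightarrow> P (\<phi>1 x) (\<phi>1 y)"
    and a2: "\<forall>x\<in>V2. \<forall>y\<in>V2. (x,y) \<in> A2 \<longleftrightarrow> P (\<phi>2 x) (\<phi>2 y)"
  shows "\<exists>f. bij_betw f V1 V2 \<and> (\<forall>x\<in>V1. \<forall>y\<in>V1. (x,y) \<in> A1 \<longleftrightarrow> (f x, f y) \<in> A2) \<and>
             (\<forall>x\<in>V1. \<phi>2 (f x) = \<phi>1 x)"
proof -
  define f where "f x = inv_into V2 \<phi>2 (\<phi>1 x)" for x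
  have fx: "f x \<in> V2 \<and> \<phi>2 (f x) = \<phi>1 x" if "x \<in> V1" for x
  proof -
    have "\<phi>1 x \<in> \<phi>2 ` V2" using im that by blast
    then show ?thesis unfolding f_def by (simp add: inv_into_into f_inv_into_f)
  qed
  have inj: "inj_on f V1"
  proof (rule inj_onI)
    fix x y assume "x \<in> V1" "y \<in> V1" "f x = f y"
    then have "\<phi>1 x = \<phi>1 y" using fx by metis
    then show "x = y" using i1 \<open>x \<in> V1\<close> \<open>y \<in> V1\<close> inj_onD by metis
  qed
  have img: "f ` V1 = V2"
  proof
    show "f ` V1 \<subseteq> V2" using fx by blast
  next
    show "V2 \<subseteq> f ` V1"
    proof
      fix z assume z: "z \<in> V2"
      then obtain y where y: "y \<in> V1" "\<phi>1 y = \<phi>2 z" using im by (metis imageE imageI)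
      have "f y = z" unfolding f_def using y z i2 by (simp add: inv_into_f_f)
      then show "z \<in> f ` V1" using y by blast
    qed
  qed
  have "\<forall>x\<in>V1. \<forall>y\<in>V1. (x,y) \<in> A1 \<longleftrightarrow> (f x, f y) \<in> A2"
    using a1 a2 fx by simp
  then show ?thesis using inj img fx unfolding bij_betw_def by blast
qed

lemma el_pres:
  assumes f: "bij_betw f V1 V2" and s1: "A1 \<subseteq> V1 \<times> V1" and s2: "A2 \<subseteq> V2 \<times> V2"
    and p: "\<forall>x\<in>V1. \<forall>y\<in>V1. (x,y) \<in> A1 \<longleftrightarrow> (f x, f y) \<in> A2" and x: "x \<in> V1"
  shows "f x \<in> el V2 A2 \<longleftrightarrow> x \<in> el V1 A1"
proof -
  have inj: "inj_on f V1" and img: "f ` V1 = V2" using f unfolding bij_betw_def by auto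
  have fxV: "f x \<in> V2" using img x by blast
  have ein: "{y. (y, f x) \<in> A2} = f ` {y. (y,x) \<in> A1}"
  proof (rule set_eqI, rule iffI)
    fix z assume z: "z \<in> {y. (y, f x) \<in> A2}"
    then have "z \<in> V2" using s2 by auto
    then obtain y where y: "y \<in> V1" "z = f y" using img by auto
    then have "(y,x) \<in> A1" using p x z by simp
    then show "z \<in> f ` {y. (y,x) \<in> A1}" using y by blast
  next
    fix z assume "z \<in> f ` {y. (y,x) \<in> A1}"
    then obtain y where y: "(y,x) \<in> A1" "z = f y" by blast
    then have "y \<in> V1" using s1 by auto
    then show "z \<in> {y. (y, f x) \<in> A2}" using p x y by simp
  qed
  have eout: "{y. (f x, y) \<in> A2} = f ` {y. (x,y) \<in> A1}"
  proof (rule set_eqI, rule iffI)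
    fix z assume z: "z \<in> {y. (f x, y) \<in> A2}"
    then have "z \<in> V2" using s2 by auto
    then obtain y where y: "y \<in> V1" "z = f y" using img by auto
    then have "(x,y) \<in> A1" using p x z by simp
    then show "z \<in> f ` {y. (x,y) \<in> A1}" using y by blast
  next
    fix z assume "z \<in> f ` {y. (x,y) \<in> A1}"
    then obtain y where y: "(x,y) \<in> A1" "z = f y" by blast
    then have "y \<in> V1" using s1 by auto
    then show "z \<in> {y. (f x, y) \<in> A2}" using p x y by simp
  qed
  have c1: "card {y. (y, f x) \<in> A2} = card {y. (y,x) \<in> A1}"
    unfolding ein by (rule card_image) (rule inj_on_subset[OF inj], use s1 in auto)
  have c2: "card {y. (f x, y) \<in> A2} = card {y. (x,y) \<in> A1}"
    unfolding eout by (rule card_image) (rule inj_on_subset[OF inj], use s1 in auto)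
  show ?thesis unfolding el_def using c1 c2 x fxV by simp
qed

lemma path_pres:
  assumes f: "bij_betw f V1 V2" and s1: "A1 \<subseteq> V1 \<times> V1" and s2: "A2 \<subseteq> V2 \<times> V2"
    and p: "\<forall>x\<in>V1. \<forall>y\<in>V1. (x,y) \<in> A1 \<longleftrightarrow> (f x, f y) \<in> A2"
    and cb: "(c,b) \<in> {(x,y) \<in> A1. x \<in> el V1 A1}\<^sup>*" and c: "c \<in> V1"
  shows "(f c, f b) \<in> {(x,y) \<in> A2. x \<in> el V2 A2}\<^sup>* \<and> b \<in> V1"
  using cb
proof (induction rule: rtrancl_induct)
  case base then show ?case using c by simp
next
  case (step y z)
  have yz: "(y,z) \<in> A1" "y \<in> el V1 A1" using step(2) by auto
  have yV: "y \<in> V1" and zV: "z \<in> V1" using yz(1) s1 by auto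
  have "(f y, f z) \<in> A2" using p yV zV yz(1) by simp
  moreover have "f y \<in> el V2 A2" using el_pres[OF f s1 s2 p yV] yz(2) by simp
  ultimately have "(f y, f z) \<in> {(x,y) \<in> A2. x \<in> el V2 A2}" by simp
  then show ?case using step(3) zV by (meson rtrancl.rtrancl_into_rtrancl)
qed

lemma red_hom:
  assumes f: "bij_betw f V1 V2" and s1: "A1 \<subseteq> V1 \<times> V1" and s2: "A2 \<subseteq> V2 \<times> V2"
    and p: "\<forall>x\<in>V1. \<forall>y\<in>V1. (x,y) \<in> A1 \<longleftrightarrow> (f x, f y) \<in> A2"
    and ab: "(a,b) \<in> rA V1 A1"
  shows "(f a, f b) \<in> rA V2 A2"
proof -
  obtain c where c: "a \<in> V1" "a \<notin> el V1 A1" "b \<in> V1" "b \<notin> el V1 A1" "(a,c) \<in> A1"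
    "(c,b) \<in> {(x,y) \<in> A1. x \<in> el V1 A1}\<^sup>*" using ab unfolding rA_def by blast
  have img: "f ` V1 = V2" using f unfolding bij_betw_def by auto
  have cV: "c \<in> V1" using c(5) s1 by auto
  have "(f a, f c) \<in> A2" using p c(1,5) cV by simp
  moreover have "(f c, f b) \<in> {(x,y) \<in> A2. x \<in> el V2 A2}\<^sup>*" using path_pres[OF f s1 s2 p c(6) cV] by simp
  moreover have "f a \<in> V2 - el V2 A2" "f b \<in> V2 - el V2 A2"
    using el_pres[OF f s1 s2 p] c img by auto
  ultimately show ?thesis unfolding rA_def by blast
qed

lemma inv_hyps:
  assumes f: "bij_betw f V1 V2" and p: "\<forall>x\<in>V1. \<forall>y\<in>V1. (x,y) \<in> A1 \<longleftrightarrow> (f x, f y) \<in> A2"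
  shows "bij_betw (inv_into V1 f) V2 V1 \<and>
    (\<forall>x\<in>V2. \<forall>y\<in>V2. (x,y) \<in> A2 \<longleftrightarrow> (inv_into V1 f x, inv_into V1 f y) \<in> A1)"
proof -
  have b: "bij_betw (inv_into V1 f) V2 V1" using f by (rule bij_betw_inv_into)
  have "\<forall>x\<in>V2. \<forall>y\<in>V2. (x,y) \<in> A2 \<longleftrightarrow> (inv_into V1 f x, inv_into V1 f y) \<in> A1"
  proof (intro ballI)
    fix x y assume x: "x \<in> V2" and y: "y \<in> V2"
    have gx: "inv_into V1 f x \<in> V1" "f (inv_into V1 f x) = x"
      using x f by (auto simp: bij_betw_def inv_into_into f_inv_into_f)
    have gy: "inv_into V1 f y \<in> V1" "f (inv_into V1 f y) = y"
      using y f by (auto simp: bij_betw_def inv_into_into f_inv_into_f)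
    show "(x,y) \<in> A2 \<longleftrightarrow> (inv_into V1 f x, inv_into V1 f y) \<in> A1"
      using p gx gy by metis
  qed
  then show ?thesis using b by blast
qed

lemma red_iso:
  assumes f: "bij_betw f V1 V2" and s1: "A1 \<subseteq> V1 \<times> V1" and s2: "A2 \<subseteq> V2 \<times> V2"
    and p: "\<forall>x\<in>V1. \<forall>y\<in>V1. (x,y) \<in> A1 \<longleftrightarrow> (f x, f y) \<in> A2"
  shows "bij_betw f (V1 - el V1 A1) (V2 - el V2 A2) \<and>
    (\<forall>a\<in>V1 - el V1 A1. \<forall>b\<in>V1 - el V1 A1. (a,b) \<in> rA V1 A1 \<longleftrightarrow> (f a, f b) \<in> rA V2 A2)"
proof -
  have inj: "inj_on f V1" and img: "f ` V1 = V2" using f unfolding bij_betw_def by auto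
  have ep: "\<And>x. x \<in> V1 \<Longrightarrow> f x \<in> el V2 A2 \<longleftrightarrow> x \<in> el V1 A1" using el_pres[OF f s1 s2 p] by blast
  have "f ` (V1 - el V1 A1) = V2 - el V2 A2"
  proof
    show "f ` (V1 - el V1 A1) \<subseteq> V2 - el V2 A2" using ep img by blast
  next
    show "V2 - el V2 A2 \<subseteq> f ` (V1 - el V1 A1)"
    proof
      fix z assume z: "z \<in> V2 - el V2 A2"
      then obtain y where y: "y \<in> V1" "z = f y" using img by auto
      then have "y \<notin> el V1 A1" using ep z by blast
      then show "z \<in> f ` (V1 - el V1 A1)" using y by blast
    qed
  qed
  then have b: "bij_betw f (V1 - el V1 A1) (V2 - el V2 A2)"
    unfolding bij_betw_def using inj_on_subset[OF inj] by blast
  obtain g where g: "g = inv_into V1 f" by blast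
  have gh: "bij_betw g V2 V1" "\<forall>x\<in>V2. \<forall>y\<in>V2. (x,y) \<in> A2 \<longleftrightarrow> (g x, g y) \<in> A1"
    using inv_hyps[OF f p] g by auto
  have "(a,b) \<in> rA V1 A1 \<longleftrightarrow> (f a, f b) \<in> rA V2 A2" if a: "a \<in> V1" and bb: "b \<in> V1" for a b
  proof
    assume "(a,b) \<in> rA V1 A1" then show "(f a, f b) \<in> rA V2 A2" by (rule red_hom[OF f s1 s2 p])
  next
    assume "(f a, f b) \<in> rA V2 A2"
    then have "(g (f a), g (f b)) \<in> rA V1 A1" by (rule red_hom[OF gh(1) s2 s1 gh(2)])
    moreover have "g (f a) = a" "g (f b) = b" using g a bb inj by (auto simp: inv_into_f_f)
    ultimately show "(a,b) \<in> rA V1 A1" by simp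
  qed
  then show ?thesis using b by blast
qed

lemma chain_end:
  assumes s: "A \<subseteq> V \<times> V" and rkd: "\<And>x y. (x,y) \<in> A \<Longrightarrow> rk y < (rk x :: nat)"
  shows "c \<in> V \<Longrightarrow> \<exists>b \<in> V - el V A. (c,b) \<in> {(x,y) \<in> A. x \<in> el V A}\<^sup>*"
proof (induction "rk c" arbitrary: c rule: less_induct)
  case less
  show ?case
  proof (cases "c \<in> el V A")
    case False then show ?thesis using less.prems by blast
  next
    case True
    then have "card {y. (c,y) \<in> A} = 1" unfolding el_def by simp
    then obtain y where y: "(c,y) \<in> A" by (metis card_1_singletonE mem_Collect_eq singletonI)
    then have "y \<in> V" "rk y < rk c" using s rkd by auto
    then obtain b where b: "b \<in> V - el V A" "(y,b) \<in> {(x,y) \<in> A. x \<in> el V A}\<^sup>*" using less.hyps by blast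
    have "(c,y) \<in> {(x,y) \<in> A. x \<in> el V A}" using y True by simp
    then show ?thesis using b by (meson converse_rtrancl_into_rtrancl)
  qed
qed



definition hasconv :: "('v, 's) net \<Rightarrow> bool" where
  "hasconv N \<longleftrightarrow> (\<exists>u \<in> nodes N. \<exists>v \<in> nodes N. u \<noteq> v \<and> convergent N u v)"

context pn begin

lemma red_eq: "hasconv N \<Longrightarrow>
  reduced N = \<lparr>nodes = V3 - el V3 A3, arcs = rA V3 A3, label = sum_label N\<rparr>"
  unfolding reduced_def hasconv_def rA_def el_def elementary3_def by simp

lemma red_eq0: "\<not> hasconv N \<Longrightarrow>
  reduced N = \<lparr>nodes = Inl ` V, arcs = map_prod Inl Inl ` E, label = sum_label N\<rparr>"
  unfolding reduced_def hasconv_def by simp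

lemma hasconv_iff: "hasconv N \<longleftrightarrow> (\<exists>K. K \<in># U \<and> convl U K)"
proof
  assume "hasconv N"
  then obtain u v where uv: "u \<in> V" "v \<in> V" "u \<noteq> v" "convergent N u v" unfolding hasconv_def by blast
  have "\<exists>w\<in>V. w \<noteq> u \<and> convergent N u w" using uv by metis
  then have "convl U (\<ll> u)" using conv_iff[OF uv(1)] by simp
  then show "\<exists>K. K \<in># U \<and> convl U K" using uv(1) inU by blast
next
  assume "\<exists>K. K \<in># U \<and> convl U K"
  then obtain K where K: "K \<in># U" "convl U K" by blast
  then obtain v where v: "v \<in> V" "\<ll> v = K" using inU by blast
  then obtain w where "w \<in> V" "w \<noteq> v" "convergent N v w" using conv_iff[OF v(1)] K by blast
  then show "hasconv N" unfolding hasconv_def using v(1) by metis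
qed

lemma nohas_uq: "\<not> hasconv N \<Longrightarrow> v \<in> V \<Longrightarrow> uq v"
  unfolding uq_def hasconv_def convergent_def using cluster_lcl by metis

lemma copy_inj: "\<not> hasconv N \<Longrightarrow> inj_on (tgN N) (Inl ` V)"
proof (rule inj_onI)
  fix x y assume h: "\<not> hasconv N" and a: "x \<in> Inl ` V" "y \<in> Inl ` V" "tgN N x = tgN N y"
  then obtain u v where uv: "x = Inl u" "y = Inl v" "u \<in> V" "v \<in> V" by blast
  then have "\<ll> u = \<ll> v" using a tgL by simp
  then show "x = y" using nohas_uq[OF h uv(3)] uv unfolding uq_def by metis
qed

lemma copy_img: "tgN N ` Inl ` V = {(False, A) | A. A \<in># U}"
  using inU tgL by (auto simp: image_iff)

lemma copy_arcs: "\<not> hasconv N \<Longrightarrow> x \<in> Inl ` V \<Longrightarrow> y \<in> Inl ` V \<Longrightarrow>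
   (x,y) \<in> map_prod Inl Inl ` E \<longleftrightarrow> snd (tgN N y) \<in># chm (snd (tgN N x))"
proof -
  assume h: "\<not> hasconv N" and x: "x \<in> Inl ` V" and y: "y \<in> Inl ` V"
  then obtain u v where uv: "x = Inl u" "y = Inl v" "u \<in> V" "v \<in> V" by blast
  have "(x,y) \<in> map_prod Inl Inl ` E \<longleftrightarrow> (u,v) \<in> E" using uv by auto
  also have "\<dots> \<longleftrightarrow> \<ll> v \<in># chm (\<ll> u)" using arc_uq[OF nohas_uq[OF h uv(4)]] uv(3) by simp
  finally show ?thesis using uv tgL by simp
qed

lemma V3_sub: "A3 \<subseteq> V3 \<times> V3" by (rule S3A_sub)

lemma R_leaf_L: assumes h: "hasconv N" and x: "Inl v \<in> V3 - el V3 A3"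
  and nc: "\<forall>b. (Inl v, b) \<notin> rA V3 A3" shows "v \<in> leaves N"
proof (rule ccontr)
  assume nl: "v \<notin> leaves N"
  obtain c where c: "(Inl v, c) \<in> A3" using internal_out x nl by blast
  then have cV: "c \<in> V3" using S3A_sub by auto
  have "\<exists>b \<in> V3 - el V3 A3. (c,b) \<in> {(x,y) \<in> A3. x \<in> el V3 A3}\<^sup>*"
    apply (rule chain_end[where rk = rk, OF S3A_sub])
     apply (erule rk_A3)
    apply (rule cV)
    done
  then obtain b where b: "b \<in> V3 - el V3 A3" "(c,b) \<in> {(x,y) \<in> A3. x \<in> el V3 A3}\<^sup>*"
    by blast
  have "(Inl v, b) \<in> rA V3 A3" unfolding rA_def using x c b by blast
  then show False using nc by blast
qed

end

theorem theorem2: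
  fixes S :: "'s set" and N1 :: "('v, 's) net" and N2 :: "('w, 's) net"
  assumes "phylo_net S N1" and "phylo_net S N2"
    and "mdist N1 N2 = 0"
  shows "net_iso (reduced N1) (reduced N2)"
proof -
  interpret p1: pn S N1 by unfold_locales (rule assms(1))
  interpret p2: pn S N2 by unfold_locales (rule assms(2))
  have "real (size (Upsilon N1 - Upsilon N2)) + real (size (Upsilon N2 - Upsilon N1)) = 0"
    using assms(3) unfolding mdist_def by simp
  then have "size (Upsilon N1 - Upsilon N2) = 0" "size (Upsilon N2 - Upsilon N1) = 0" by linarith+
  then have "Upsilon N1 - Upsilon N2 = {#}" "Upsilon N2 - Upsilon N1 = {#}" by auto
  then have UU: "Upsilon N1 = Upsilon N2"
    by (metis subset_mset.antisym Diff_eq_empty_iff_mset)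
  show ?thesis
  proof (cases "hasconv N1")
    case h1: True
    then have h2: "hasconv N2" using p1.hasconv_iff p2.hasconv_iff UU by simp
    obtain f where f: "bij_betw f (step3_nodes N1) (step3_nodes N2)"
      "\<forall>x\<in>step3_nodes N1. \<forall>y\<in>step3_nodes N1. (x,y) \<in> step3_arcs N1 \<longleftrightarrow> (f x, f y) \<in> step3_arcs N2"
      "\<forall>x\<in>step3_nodes N1. tgN N2 (f x) = tgN N1 x"
    proof -
      have im: "tgN N1 ` step3_nodes N1 = tgN N2 ` step3_nodes N2" using p1.V3_img p2.V3_img UU by simp
      have a1: "\<forall>x\<in>step3_nodes N1. \<forall>y\<in>step3_nodes N1. (x,y) \<in> step3_arcs N1 \<longleftrightarrow>
          A3l (Upsilon N1) (tgN N1 x) (tgN N1 y)" using p1.A3_lab by blast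
      have a2: "\<forall>x\<in>step3_nodes N2. \<forall>y\<in>step3_nodes N2. (x,y) \<in> step3_arcs N2 \<longleftrightarrow>
          A3l (Upsilon N1) (tgN N2 x) (tgN N2 y)" using p2.A3_lab UU by simp
      show ?thesis using label_iso[OF p1.V3_inj p2.V3_inj im a1 a2] that by blast
    qed
    have ri: "bij_betw f (step3_nodes N1 - el (step3_nodes N1) (step3_arcs N1))
                         (step3_nodes N2 - el (step3_nodes N2) (step3_arcs N2))"
      "\<forall>a\<in>step3_nodes N1 - el (step3_nodes N1) (step3_arcs N1).
        \<forall>b\<in>step3_nodes N1 - el (step3_nodes N1) (step3_arcs N1).
        (a,b) \<in> rA (step3_nodes N1) (step3_arcs N1) \<longleftrightarrow>
        (f a, f b) \<in> rA (step3_nodes N2) (step3_arcs N2)"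
      using red_iso[OF f(1) p1.S3A_sub p2.S3A_sub f(2)] by auto
    have lab: "label (reduced N2) (f x) = label (reduced N1) x" if x: "x \<in> leaves (reduced N1)" for x
    proof -
      have xn: "x \<in> step3_nodes N1 - el (step3_nodes N1) (step3_arcs N1)"
        and nc: "\<forall>b. (x, b) \<notin> rA (step3_nodes N1) (step3_arcs N1)"
        using x unfolding leaves_def children_def p1.red_eq[OF h1] by auto
      have fx: "f x \<in> step3_nodes N2" using xn f(1) unfolding bij_betw_def by auto
      have tg: "tgN N2 (f x) = tgN N1 x" using f(3) xn by blast
      show ?thesis
      proof (cases x)
        case (Inl v)
        then have vl: "v \<in> leaves N1" using p1.R_leaf_L[OF h1] xn nc by blast
        obtain w where w: "f x = Inl w"
          using tg Inl by (cases "f x") (auto simp: p1.tgL p2.tgR)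
        then have wV: "w \<in> nodes N2" using fx p2.S3N_L by simp
        have "nested_label N2 w = nested_label N1 v" using tg w Inl p1.tgL p2.tgL by simp
        also have "\<dots> = NLeaf (label N1 v)" using p1.nl_leaf vl by simp
        finally have "label N2 w = label N1 v" using p2.leaf_nl[OF wV] by simp
        then show ?thesis unfolding p1.red_eq[OF h1] p2.red_eq[OF h2] using w Inl
          by (simp add: sum_label_def)
      next
        case (Inr r)
        obtain r' where "f x = Inr r'"
          using tg Inr by (cases "f x") (auto simp: p2.tgL p1.tgR)
        then show ?thesis unfolding p1.red_eq[OF h1] p2.red_eq[OF h2] using Inr
          by (simp add: sum_label_def)
      qed
    qed
    show ?thesis unfolding net_iso_def
      apply (rule exI[of _ f])
      unfolding p1.red_eq[OF h1] p2.red_eq[OF h2]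
      using ri lab unfolding p1.red_eq[OF h1] p2.red_eq[OF h2] by simp
  next
    case h1: False
    then have h2: "\<not> hasconv N2" using p1.hasconv_iff p2.hasconv_iff UU by simp
    obtain f where f: "bij_betw f (Inl ` nodes N1) (Inl ` nodes N2)"
      "\<forall>x\<in>Inl ` nodes N1. \<forall>y\<in>Inl ` nodes N1. (x,y) \<in> map_prod Inl Inl ` arcs N1 \<longleftrightarrow> (f x, f y) \<in> map_prod Inl Inl ` arcs N2"
      "\<forall>x\<in>Inl ` nodes N1. tgN N2 (f x) = tgN N1 x"
    proof -
      have im: "tgN N1 ` Inl ` nodes N1 = tgN N2 ` Inl ` nodes N2" using p1.copy_img p2.copy_img UU by simp
      have a1: "\<forall>x\<in>Inl ` nodes N1. \<forall>y\<in>Inl ` nodes N1. (x,y) \<in> map_prod Inl Inl ` arcs N1 \<longleftrightarrow>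
          (\<lambda>x y. snd y \<in># chm (snd x)) (tgN N1 x) (tgN N1 y)" using p1.copy_arcs[OF h1] by blast
      have a2: "\<forall>x\<in>Inl ` nodes N2. \<forall>y\<in>Inl ` nodes N2. (x,y) \<in> map_prod Inl Inl ` arcs N2 \<longleftrightarrow>
          (\<lambda>x y. snd y \<in># chm (snd x)) (tgN N2 x) (tgN N2 y)" using p2.copy_arcs[OF h2] by blast
      show ?thesis using label_iso[OF p1.copy_inj[OF h1] p2.copy_inj[OF h2] im a1 a2] that by blast
    qed
    have lab: "label (reduced N2) (f x) = label (reduced N1) x" if x: "x \<in> leaves (reduced N1)" for x
    proof -
      obtain v where v: "x = Inl v" "v \<in> nodes N1" "\<forall>w. (v,w) \<notin> arcs N1"
        using x unfolding leaves_def children_def p1.red_eq0[OF h1] by auto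
      then have vl: "v \<in> leaves N1" using p1.leaf_iff by simp
      have fx: "f x \<in> Inl ` nodes N2" using v f(1) unfolding bij_betw_def by auto
      then obtain w where w: "f x = Inl w" "w \<in> nodes N2" by blast
      have tg: "tgN N2 (f x) = tgN N1 x" using f(3) v by blast
      have "nested_label N2 w = nested_label N1 v" using tg w v p1.tgL p2.tgL by simp
      also have "\<dots> = NLeaf (label N1 v)" using p1.nl_leaf vl by simp
      finally have "label N2 w = label N1 v" using p2.leaf_nl[OF w(2)] by simp
      then show ?thesis unfolding p1.red_eq0[OF h1] p2.red_eq0[OF h2] using w v
        by (simp add: sum_label_def)
    qed
    show ?thesis unfolding net_iso_def
      apply (rule exI[of _ f])
      using f(1,2) lab unfolding p1.red_eq0[OF h1] p2.red_eq0[OF h2] by simp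
  qed
qed


end
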